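(* The number of polygonizations that a double chain $D$ with $n$ points on its upper chain $U$ and $m$ points on its lower chain $L$ admits is at most $O(5.610718614^{n+m})$.
   Context: A polygonization of a finite point set in the plane is a non-crossing Hamiltonian cycle on it (a simple polygon with straight-line edges whose vertex set is exactly the point set). A double chain with $n$ upper and $m$ lower points is a planar point set such that $n$ of the points lie on an upper convex chain $U$ and the other $m$ lie on a lower convex chain $L$, the two chains having opposite concavity; for every pair of points of $U$, the line through them leaves all points of $L$ below it; and for every pair of points of $L$, the line through them leaves all points of $U$ above it. *)

theory Defs
  imports "HOL-Analysis.Analysis"
begin

type_synonym pt = "real \<times> real"

text \<open>Signed area (cross product) of the triangle p, q, r; positive iff r lies to the
  left of the directed line from p to q.\<close>
definition cross :: "pt \<Rightarrow> pt \<Rightarrow> pt \<Rightarrow> real" where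
  "cross p q r = (fst q - fst p) * (snd r - snd p) - (snd q - snd p) * (fst r - fst p)"

definition strictly_above :: "pt \<Rightarrow> pt \<Rightarrow> pt \<Rightarrow> bool" where
  "strictly_above p q r = (if fst p < fst q then cross p q r > 0 else cross q p r > 0)"

definition strictly_below :: "pt \<Rightarrow> pt \<Rightarrow> pt \<Rightarrow> bool" where
  "strictly_below p q r = (if fst p < fst q then cross p q r < 0 else cross q p r < 0)"

definition convex_chain :: "pt set \<Rightarrow> bool" where
  "convex_chain S \<longleftrightarrow> finite S \<and> inj_on fst S \<and>
     (\<forall>p\<in>S. \<forall>q\<in>S. \<forall>r\<in>S. fst p < fst q \<and> fst q < fst r \<longrightarrow> strictly_below p r q)"

definition concave_chain :: "pt set \<Rightarrow> bool" where
  "concave_chain S \<longleftrightarrow> finite S \<and> inj_on fst S \<and>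
     (\<forall>p\<in>S. \<forall>q\<in>S. \<forall>r\<in>S. fst p < fst q \<and> fst q < fst r \<longrightarrow> strictly_above p r q)"

definition double_chain :: "pt set \<Rightarrow> pt set \<Rightarrow> bool" where
  "double_chain U L \<longleftrightarrow> U \<inter> L = {} \<and>
     ((convex_chain U \<and> concave_chain L) \<or> (concave_chain U \<and> convex_chain L)) \<and>
     (\<forall>p\<in>U. \<forall>q\<in>U. p \<noteq> q \<longrightarrow> (\<forall>l\<in>L. strictly_below p q l)) \<and>
     (\<forall>p\<in>L. \<forall>q\<in>L. p \<noteq> q \<longrightarrow> (\<forall>u\<in>U. strictly_above p q u))"

definition cycle_edges :: "pt list \<Rightarrow> pt set set" where
  "cycle_edges vs = {{vs ! i, vs ! ((i + 1) mod length vs)} | i. i < length vs}"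

text \<open>A polygonization of P, represented by its edge set: a Hamiltonian cycle on P whose
  straight-line edges pairwise meet only in common endpoints.\<close>
definition polygonization :: "pt set \<Rightarrow> pt set set \<Rightarrow> bool" where
  "polygonization P E \<longleftrightarrow>
     (\<exists>vs. distinct vs \<and> set vs = P \<and> length vs \<ge> 3 \<and> E = cycle_edges vs) \<and>
     (\<forall>e\<in>E. \<forall>f\<in>E. e \<noteq> f \<longrightarrow>
        (\<Union>a\<in>e. \<Union>b\<in>e. closed_segment a b) \<inter> (\<Union>a\<in>f. \<Union>b\<in>f. closed_segment a b) \<subseteq> e \<inter> f)"

end

theory Submission
  imports Defs "HOL-Library.FuncSet"
begin

definition pedges :: "'a list \<Rightarrow> 'a set set" where
  "pedges xs = {{xs!i, xs!Suc i} | i. Suc i < length xs}"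

lemma pedges_Nil[simp]: "pedges [] = {}" by (simp add: pedges_def)
lemma pedges_single[simp]: "pedges [x] = {}" by (simp add: pedges_def)

lemma pedges_Cons2[simp]: "pedges (x # y # xs) = insert {x,y} (pedges (y # xs))"
proof -
  have "pedges (x # y # xs) = {{(x#y#xs)!i, (x#y#xs)!Suc i} | i. Suc i < length (x#y#xs)}"
    by (simp add: pedges_def)
  also have "\<dots> = insert {x,y} {{(y#xs)!i, (y#xs)!Suc i} | i. Suc i < length (y#xs)}"
  proof (rule set_eqI, rule iffI)
    fix e assume "e \<in> {{(x#y#xs)!i, (x#y#xs)!Suc i} | i. Suc i < length (x#y#xs)}"
    then obtain i where "e = {(x#y#xs)!i, (x#y#xs)!Suc i}" "Suc i < length (x#y#xs)" by blast
    then show "e \<in> insert {x,y} {{(y#xs)!i, (y#xs)!Suc i} | i. Suc i < length (y#xs)}"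
      by (cases i) auto
  next
    fix e assume "e \<in> insert {x,y} {{(y#xs)!i, (y#xs)!Suc i} | i. Suc i < length (y#xs)}"
    then show "e \<in> {{(x#y#xs)!i, (x#y#xs)!Suc i} | i. Suc i < length (x#y#xs)}"
    proof
      assume "e = {x,y}"
      moreover have "{x,y} = {(x#y#xs)!0, (x#y#xs)!Suc 0}" by simp
      ultimately show ?thesis by force
    next
      assume "e \<in> {{(y#xs)!i, (y#xs)!Suc i} | i. Suc i < length (y#xs)}"
      then obtain i where "e = {(y#xs)!i, (y#xs)!Suc i}" "Suc i < length (y#xs)" by blast
      then have "e = {(x#y#xs)!Suc i, (x#y#xs)!Suc (Suc i)} \<and> Suc (Suc i) < length (x#y#xs)" by simp
      then show ?thesis by blast
    qed
  qed
  also have "\<dots> = insert {x,y} (pedges (y # xs))" by (simp add: pedges_def)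
  finally show ?thesis .
qed

lemma pedges_Cons: "xs \<noteq> [] \<Longrightarrow> pedges (x # xs) = insert {x, hd xs} (pedges xs)"
  by (cases xs) auto

lemma pedges_map: "pedges (map f xs) = (\<lambda>e. f ` e) ` pedges xs"
proof (induction xs rule: induct_list012)
  case (3 x y zs) then show ?case by simp
qed auto

lemma pedges_append_single: "xs \<noteq> [] \<Longrightarrow> pedges (xs @ [y]) = insert {last xs, y} (pedges xs)"
proof (induction xs rule: induct_list012)
  case (3 x y' zs) then show ?case by (auto simp: insert_commute)
qed auto

lemma pedges_rev[simp]: "pedges (rev xs) = pedges xs"
proof (induction xs rule: induct_list012)
  case (3 x y zs)
  have "pedges (rev (x # y # zs)) = pedges ((rev zs @ [y]) @ [x])" by simp
  also have "\<dots> = insert {y, x} (pedges (rev zs @ [y]))"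
    by (subst pedges_append_single) auto
  also have "rev zs @ [y] = rev (y # zs)" by simp
  finally show ?case using 3 by (auto simp: insert_commute)
qed auto

lemma pedges_subset: "e \<in> pedges xs \<Longrightarrow> e \<subseteq> set xs"
  by (auto simp: pedges_def)

lemma pedges_finite: "finite (pedges xs)"
proof -
  have "pedges xs = (\<lambda>i. {xs!i, xs!Suc i}) ` {i. Suc i < length xs}" by (auto simp: pedges_def)
  moreover have "finite {i. Suc i < length xs}" by (rule finite_subset[of _ "{..<length xs}"]) auto
  ultimately show ?thesis by simp
qed

lemma pedges_card2: "e \<in> pedges xs \<Longrightarrow> distinct xs \<Longrightarrow> \<exists>a b. a \<noteq> b \<and> e = {a,b}"
proof -
  assume "e \<in> pedges xs" "distinct xs"
  then obtain i where "e = {xs!i, xs!Suc i}" "Suc i < length xs" by (auto simp: pedges_def)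
  moreover have "xs!i \<noteq> xs!Suc i" using calculation \<open>distinct xs\<close> by (simp add: nth_eq_iff_index_eq)
  ultimately show ?thesis by blast
qed

lemma change_point:
  assumes "i < length xs" "j < length xs" "Q (xs!i) \<noteq> Q (xs!j)"
  shows "\<exists>k. Suc k < length xs \<and> Q (xs!k) \<noteq> Q (xs!Suc k)"
proof (rule ccontr)
  assume "\<not> ?thesis"
  then have step: "\<And>k. Suc k < length xs \<Longrightarrow> Q (xs!k) = Q (xs!Suc k)" by blast
  have "\<And>k. k < length xs \<Longrightarrow> Q (xs!k) = Q (xs!0)"
  proof -
    fix k show "k < length xs \<Longrightarrow> Q (xs!k) = Q (xs!0)"
      by (induction k) (auto dest: step)
  qed
  then show False using assms by metis
qed

definition ncross :: "nat set set \<Rightarrow> bool" where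
  "ncross F \<longleftrightarrow> (\<forall>a b c d. {a,b} \<in> F \<longrightarrow> {c,d} \<in> F \<longrightarrow> a < c \<longrightarrow> c < b \<longrightarrow> b < d \<longrightarrow> False)"

lemma ncross_mono: "ncross F \<Longrightarrow> G \<subseteq> F \<Longrightarrow> ncross G"
  unfolding ncross_def by blast

lemma straddle:
  assumes "ncross F" "{a,b} \<in> F" "{x,y} \<in> F" "a < x" "x < b" "y < a \<or> b < y"
  shows False
proof (cases "y < a")
  case True
  have "{y,x} \<in> F" using assms(3) by (simp add: insert_commute)
  then show False using assms True unfolding ncross_def by blast
next
  case False
  then have "b < y" using assms by auto
  then show False using assms unfolding ncross_def by blast
qed

definition PL :: "nat set \<Rightarrow> nat list set" where
  "PL S = {R. distinct R \<and> set R = S \<and> ncross (pedges R)}"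

definition cnb :: "nat set \<Rightarrow> nat \<Rightarrow> nat set" where
  "cnb S x = {y\<in>S. y \<noteq> x \<and> ((\<forall>t\<in>S. \<not> (min x y < t \<and> t < max x y)) \<or> (\<forall>t\<in>S. min x y \<le> t \<and> t \<le> max x y))}"

lemma PL_finite: "finite S \<Longrightarrow> finite (PL S)"
  by (rule finite_subset[OF _ finite_subset_distinct[of S]]) (auto simp: PL_def)

lemma cnb_card:
  assumes "finite S" shows "card (cnb S x) \<le> 2"
proof -
  have sub: "\<exists>a b. cnb S x \<subseteq> {a, b}"
  proof (cases "\<forall>t\<in>S. x \<le> t")
    case xmin: True
    define a where "a = Min {t\<in>S. x < t}"
    define b where "b = Max S"
    have "cnb S x \<subseteq> {a, b}"
    proof
      fix y assume y: "y \<in> cnb S x"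
      then have yS: "y \<in> S" "y \<noteq> x" by (auto simp: cnb_def)
      then have xy: "x < y" using xmin by force
      have fin: "finite {t\<in>S. x < t}" using assms by simp
      from y consider "\<forall>t\<in>S. \<not> (x < t \<and> t < y)" | "\<forall>t\<in>S. x \<le> t \<and> t \<le> y"
        using xy by (auto simp: cnb_def min_def max_def split: if_splits)
      then show "y \<in> {a, b}"
      proof cases
        case 1
        have "a \<in> {t\<in>S. x < t}" unfolding a_def using fin yS xy by (intro Min_in) auto
        moreover have "a \<le> y" unfolding a_def using fin yS xy by (intro Min_le) auto
        ultimately have "a = y" using 1 by force
        then show ?thesis by simp
      next
        case 2
        have "b \<in> S" unfolding b_def using assms yS by (intro Max_in) auto
        moreover have "y \<le> b" unfolding b_def using assms yS by (intro Max_ge) auto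
        ultimately have "b = y" using 2 by force
        then show ?thesis by simp
      qed
    qed
    then show ?thesis by blast
  next
    case False
    then obtain t0 where t0: "t0 \<in> S" "t0 < x" by force
    show ?thesis
    proof (cases "\<forall>t\<in>S. t \<le> x")
      case xmax: True
      define a where "a = Max {t\<in>S. t < x}"
      define b where "b = Min S"
      have "cnb S x \<subseteq> {a, b}"
      proof
        fix y assume y: "y \<in> cnb S x"
        then have yS: "y \<in> S" "y \<noteq> x" by (auto simp: cnb_def)
        then have xy: "y < x" using xmax by force
        have fin: "finite {t\<in>S. t < x}" using assms by simp
        from y consider "\<forall>t\<in>S. \<not> (y < t \<and> t < x)" | "\<forall>t\<in>S. y \<le> t \<and> t \<le> x"
          using xy by (auto simp: cnb_def min_def max_def split: if_splits)
        then show "y \<in> {a, b}"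
        proof cases
          case 1
          have "a \<in> {t\<in>S. t < x}" unfolding a_def using fin yS xy by (intro Max_in) auto
          moreover have "y \<le> a" unfolding a_def using fin yS xy by (intro Max_ge) auto
          ultimately have "a = y" using 1 by force
          then show ?thesis by simp
        next
          case 2
          have "b \<in> S" unfolding b_def using assms yS by (intro Min_in) auto
          moreover have "b \<le> y" unfolding b_def using assms yS by (intro Min_le) auto
          ultimately have "b = y" using 2 by force
          then show ?thesis by simp
        qed
      qed
      then show ?thesis by blast
    next
      case False
      then obtain t1 where t1: "t1 \<in> S" "x < t1" by force
      define a where "a = Max {t\<in>S. t < x}"
      define b where "b = Min {t\<in>S. x < t}"
      have fin1: "finite {t\<in>S. t < x}" "finite {t\<in>S. x < t}" using assms by auto
      have "cnb S x \<subseteq> {a, b}"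
      proof
        fix y assume y: "y \<in> cnb S x"
        then have yS: "y \<in> S" "y \<noteq> x" by (auto simp: cnb_def)
        have not2: "\<not> (\<forall>t\<in>S. min x y \<le> t \<and> t \<le> max x y)"
        proof
          assume h: "\<forall>t\<in>S. min x y \<le> t \<and> t \<le> max x y"
          show False
          proof (cases "x < y")
            case True then show False using h t0 by (auto simp: min_def max_def split: if_splits)
          next
            case False then show False using h t1 yS by (auto simp: min_def max_def split: if_splits)
          qed
        qed
        then have h1: "\<forall>t\<in>S. \<not> (min x y < t \<and> t < max x y)" using y by (auto simp: cnb_def)
        show "y \<in> {a, b}"
        proof (cases "x < y")
          case True
          have "b \<in> {t\<in>S. x < t}" unfolding b_def using fin1 yS True by (intro Min_in) auto
          moreover have "b \<le> y" unfolding b_def using fin1 yS True by (intro Min_le) auto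
          ultimately have "b = y" using h1 True by force
          then show ?thesis by simp
        next
          case False
          then have yx: "y < x" using yS by simp
          have "a \<in> {t\<in>S. t < x}" unfolding a_def using fin1 yS yx by (intro Max_in) auto
          moreover have "y \<le> a" unfolding a_def using fin1 yS yx by (intro Max_ge) auto
          ultimately have "a = y" using h1 yx by force
          then show ?thesis by simp
        qed
      qed
      then show ?thesis by blast
    qed
  qed
  then obtain a b where "cnb S x \<subseteq> {a, b}" by blast
  then have "card (cnb S x) \<le> card {a, b}" by (intro card_mono) auto
  also have "\<dots> \<le> 2" by (cases "a = b") auto
  finally show ?thesis .
qed

lemma second_in_cnb:
  assumes "x # y # R \<in> PL S" shows "y \<in> cnb S x"
proof (rule ccontr)
  assume ny: "y \<notin> cnb S x"
  have d: "distinct (x # y # R)" and sS: "set (x # y # R) = S" and nc: "ncross (pedges (x # y # R))"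
    using assms by (auto simp: PL_def)
  define lo where "lo = min x y"
  define hi where "hi = max x y"
  have lohi: "lo < hi" "{lo,hi} = {x,y}" using d by (auto simp: lo_def hi_def min_def max_def)
  have yS: "y \<in> S" "y \<noteq> x" using sS d by auto
  have nn: "\<not> ((\<forall>t\<in>S. \<not> (lo < t \<and> t < hi)) \<or> (\<forall>t\<in>S. lo \<le> t \<and> t \<le> hi))"
    using ny yS unfolding cnb_def lo_def hi_def by blast
  then obtain t1 where t1: "t1 \<in> S" "lo < t1" "t1 < hi" by blast
  from nn obtain t2 where t2S: "t2 \<in> S" and t2n: "\<not> (lo \<le> t2 \<and> t2 \<le> hi)" by blast
  have t2: "t2 < lo \<or> hi < t2" using t2n by auto
  have xyR: "x \<notin> set R" "y \<notin> set R" using d by auto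
  have bnd: "lo \<le> x" "x \<le> hi" "lo \<le> y" "y \<le> hi" by (auto simp: lo_def hi_def)
  have xy_lh: "x = lo \<or> x = hi" "y = lo \<or> y = hi" by (auto simp: lo_def hi_def min_def max_def)
  have "t1 \<noteq> x" "t1 \<noteq> y" using t1 xy_lh by auto
  then have t1R: "t1 \<in> set R" using t1 sS by auto
  have "t2 \<noteq> x" "t2 \<noteq> y" using t2 bnd by auto
  then have t2R: "t2 \<in> set R" using t2S sS by auto
  obtain i where i: "i < length R" "R!i = t1" using t1R by (auto simp: in_set_conv_nth)
  obtain j where j: "j < length R" "R!j = t2" using t2R by (auto simp: in_set_conv_nth)
  let ?Q = "\<lambda>v. lo < v \<and> v < hi"
  have "?Q (R!i) \<noteq> ?Q (R!j)" using i j t1 t2 by auto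
  then obtain k where k: "Suc k < length R" "?Q (R!k) \<noteq> ?Q (R!Suc k)"
    using change_point[OF i(1) j(1), of ?Q] by blast
  define v where "v = R!k"
  define w where "w = R!Suc k"
  have vR: "v \<in> set R" "w \<in> set R" using k(1) unfolding v_def w_def by auto
  have notxy: "v \<noteq> lo" "v \<noteq> hi" "w \<noteq> lo" "w \<noteq> hi" using vR xyR lohi by auto
  have e1: "{lo,hi} \<in> pedges (x # y # R)" using lohi by simp
  have "{v, w} \<in> pedges R" using k(1) unfolding v_def w_def by (auto simp: pedges_def)
  moreover have "pedges R \<subseteq> pedges (x # y # R)" by (cases R) auto
  ultimately have e2: "{v, w} \<in> pedges (x # y # R)" by blast
  have e2': "{w, v} \<in> pedges (x # y # R)" using e2 by (simp add: insert_commute)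
  have kq: "?Q v \<noteq> ?Q w" using k unfolding v_def w_def by simp
  show False
  proof (cases "?Q v")
    case True
    then have "\<not> ?Q w" using kq by simp
    then have "w < lo \<or> hi < w" using notxy by auto
    then show False using straddle[OF nc e1 e2] True by blast
  next
    case False
    then have q: "?Q w" using kq by blast
    have "v < lo \<or> hi < v" using False notxy by auto
    then show False using straddle[OF nc e1 e2'] q by blast
  qed
qed

lemma PL_tail:
  assumes "x # R \<in> PL S" shows "R \<in> PL (S - {x})"
proof -
  have "pedges R \<subseteq> pedges (x # R)" by (cases R) auto
  then show ?thesis using assms by (auto simp: PL_def intro: ncross_mono)
qed

lemma card_le1_sub: "A \<subseteq> {a} \<Longrightarrow> card A \<le> 1"
proof -
  assume "A \<subseteq> {a}"
  then have "card A \<le> card {a}" by (intro card_mono) auto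
  then show ?thesis by simp
qed

lemma len2_conv: "length R = 2 \<Longrightarrow> \<exists>a b. R = [a,b]"
  by (auto simp: length_Suc_conv numeral_2_eq_2)

lemma len1_conv: "length R = 1 \<Longrightarrow> \<exists>a. R = [a]"
  by (auto simp: length_Suc_conv)

lemma PLx_card:
  "finite S \<Longrightarrow> card S = Suc (Suc k) \<Longrightarrow> x \<in> S \<Longrightarrow> card {R\<in>PL S. hd R = x} \<le> 2^k"
proof (induction k arbitrary: S x)
  case 0
  then have "card (S - {x}) = 1" by simp
  then obtain y where y: "S - {x} = {y}" using card_1_singletonE by blast
  then have S: "S = {x, y}" "x \<noteq> y" using 0 by auto
  have "{R\<in>PL S. hd R = x} \<subseteq> {[x,y]}"
  proof
    fix R assume R: "R \<in> {R\<in>PL S. hd R = x}"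
    then have d: "distinct R" "set R = S" "hd R = x" by (auto simp: PL_def)
    then have "length R = 2" using S distinct_card by fastforce
    then obtain a b where "R = [a,b]" using len2_conv by blast
    then show "R \<in> {[x,y]}" using d S by auto
  qed
  then show ?case using card_le1_sub by simp
next
  case (Suc k)
  let ?S' = "S - {x}"
  have cS': "card ?S' = Suc (Suc k)" using Suc.prems by simp
  have sub: "{R\<in>PL S. hd R = x} \<subseteq> (\<Union>y\<in>cnb S x. (\<lambda>R. x # R) ` {R\<in>PL ?S'. hd R = y})"
  proof
    fix R assume R: "R \<in> {R\<in>PL S. hd R = x}"
    then have d: "distinct R" "set R = S" "hd R = x" by (auto simp: PL_def)
    then have "length R = card S" using distinct_card by fastforce
    obtain R' where R'0: "R = x # R'" using d Suc.prems by (cases R) auto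
    then have R': "R = x # R'" "R' \<noteq> []" using d Suc.prems \<open>length R = card S\<close> by auto
    then obtain y R'' where R'': "R' = y # R''" by (cases R') auto
    have "y \<in> cnb S x" using second_in_cnb R R' R'' by auto
    moreover have "R' \<in> PL ?S'" using PL_tail R R' by auto
    ultimately show "R \<in> (\<Union>y\<in>cnb S x. (\<lambda>R. x # R) ` {R\<in>PL ?S'. hd R = y})"
      using R' R'' by auto
  qed
  have fincnb: "finite (cnb S x)" using Suc.prems by (auto simp: cnb_def)
  have fin2: "finite (\<Union>y\<in>cnb S x. (\<lambda>R. x # R) ` {R\<in>PL ?S'. hd R = y})"
  proof (rule finite_UN_I[OF fincnb])
    fix y
    have "finite (PL ?S')" using PL_finite Suc.prems by simp
    then show "finite ((\<lambda>R. x # R) ` {R\<in>PL ?S'. hd R = y})" by simp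
  qed
  have "card {R\<in>PL S. hd R = x} \<le> card (\<Union>y\<in>cnb S x. (\<lambda>R. x # R) ` {R\<in>PL ?S'. hd R = y})"
    using sub fin2 by (intro card_mono) auto
  also have "\<dots> \<le> (\<Sum>y\<in>cnb S x. card ((\<lambda>R. x # R) ` {R\<in>PL ?S'. hd R = y}))"
    by (rule card_UN_le[OF fincnb])
  also have "\<dots> \<le> (\<Sum>y\<in>cnb S x. 2^k)"
  proof (rule sum_mono)
    fix y assume y: "y \<in> cnb S x"
    then have "y \<in> ?S'" by (auto simp: cnb_def)
    then have "card {R\<in>PL ?S'. hd R = y} \<le> 2^k" using Suc.IH[of ?S' y] cS' Suc.prems by auto
    moreover have "finite {R\<in>PL ?S'. hd R = y}" using PL_finite Suc.prems by simp
    ultimately show "card ((\<lambda>R. x # R) ` {R\<in>PL ?S'. hd R = y}) \<le> 2^k"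
      using card_image_le[of "{R\<in>PL ?S'. hd R = y}" "\<lambda>R. x # R"] by linarith
  qed
  also have "\<dots> = card (cnb S x) * 2^k" by simp
  also have "\<dots> \<le> 2 * 2^k" using cnb_card[OF Suc.prems(1)] by simp
  finally show ?case by simp
qed

lemma PL_card:
  assumes "finite S" "card S = Suc (Suc k)"
  shows "card (PL S) \<le> card S * 2^k"
proof -
  have "PL S \<subseteq> (\<Union>x\<in>S. {R\<in>PL S. hd R = x})"
  proof
    fix R assume "R \<in> PL S"
    then have "R \<noteq> []" "set R = S" using assms by (auto simp: PL_def)
    then show "R \<in> (\<Union>x\<in>S. {R\<in>PL S. hd R = x})" using \<open>R \<in> PL S\<close> by auto
  qed
  then have "card (PL S) \<le> card (\<Union>x\<in>S. {R\<in>PL S. hd R = x})"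
    using assms PL_finite[OF assms(1)] by (intro card_mono) auto
  also have "\<dots> \<le> (\<Sum>x\<in>S. card {R\<in>PL S. hd R = x})" by (rule card_UN_le[OF assms(1)])
  also have "\<dots> \<le> (\<Sum>x\<in>S. 2^k)" using PLx_card assms by (intro sum_mono) auto
  finally show ?thesis by simp
qed

definition pcount :: "nat \<Rightarrow> nat" where
  "pcount k = (if k \<le> 2 then 1 else k * 2^(k-3))"

lemma paths_card:
  assumes "finite S" "S \<noteq> {}"
  shows "card (pedges ` PL S) \<le> pcount (card S)"
proof -
  have "card S \<noteq> 0" using assms by simp
  then obtain m where m: "card S = Suc m" using not0_implies_Suc by blast
  consider "card S = 1" | "card S = 2" | k where "card S = Suc (Suc (Suc k))"
  proof (cases m)
    case 0 then show ?thesis using m that by simp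
  next
    case (Suc m')
    then show ?thesis using m that by (cases m') auto
  qed
  then show ?thesis
  proof cases
    case 1
    then obtain s where S: "S = {s}" using card_1_singletonE by blast
    have "pedges ` PL S \<subseteq> {{}}"
    proof
      fix e assume "e \<in> pedges ` PL S"
      then obtain R where R: "R \<in> PL S" "e = pedges R" by blast
      then have "distinct R" "set R = {s}" using S by (auto simp: PL_def)
      then have "length R = 1" using distinct_card by fastforce
      then obtain a where "R = [a]" using len1_conv by blast
      then have "R = [s]" using \<open>set R = {s}\<close> by simp
      then show "e \<in> {{}}" using R by simp
    qed
    then have "card (pedges ` PL S) \<le> 1" by (rule card_le1_sub)
    then show ?thesis using 1 by (simp add: pcount_def)
  next
    case 2
    have "pedges ` PL S \<subseteq> {{S}}"
    proof
      fix e assume "e \<in> pedges ` PL S"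
      then obtain R where R: "R \<in> PL S" "e = pedges R" by blast
      then have d: "distinct R" "set R = S" by (auto simp: PL_def)
      then have "length R = 2" using 2 distinct_card by fastforce
      then obtain a b where "R = [a,b]" using len2_conv by blast
      then show "e \<in> {{S}}" using R d by auto
    qed
    then have "card (pedges ` PL S) \<le> 1" by (rule card_le1_sub)
    then show ?thesis using 2 by (simp add: pcount_def)
  next
    case 3
    let ?A = "{R\<in>PL S. hd R < last R}"
    let ?B = "{R\<in>PL S. last R < hd R}"
    have len: "R \<in> PL S \<Longrightarrow> length R = card S" for R using distinct_card by (fastforce simp: PL_def)
    have hdlast: "R \<in> PL S \<Longrightarrow> hd R \<noteq> last R" for R
    proof -
      assume R: "R \<in> PL S"
      then have "length R \<ge> 2" "distinct R" using len 3 by (auto simp: PL_def)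
      then have ne: "R \<noteq> []" by auto
      have "0 < length R" "length R - 1 < length R" "0 \<noteq> length R - 1" using \<open>length R \<ge> 2\<close> by auto
      then have "R!0 \<noteq> R!(length R - 1)" using \<open>distinct R\<close> by (simp only: nth_eq_iff_index_eq) simp
      then show "hd R \<noteq> last R" using ne by (simp add: hd_conv_nth last_conv_nth)
    qed
    have revPL: "R \<in> PL S \<Longrightarrow> rev R \<in> PL S" for R by (auto simp: PL_def)
    have im: "pedges ` PL S \<subseteq> pedges ` ?A"
    proof
      fix e assume "e \<in> pedges ` PL S"
      then obtain R where R: "R \<in> PL S" "e = pedges R" by blast
      show "e \<in> pedges ` ?A"
      proof (cases "hd R < last R")
        case True then show ?thesis using R by auto
      next
        case False
        then have "last R < hd R" using hdlast[OF R(1)] by simp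
        moreover have "R \<noteq> []" using R len 3 by fastforce
        ultimately have "rev R \<in> ?A" using revPL[OF R(1)] by (simp add: hd_rev last_rev)
        moreover have "e = pedges (rev R)" using R by simp
        ultimately show ?thesis by blast
      qed
    qed
    have fin: "finite (PL S)" using PL_finite assms by blast
    have revAB: "rev ` ?A = ?B"
    proof (rule set_eqI, rule iffI)
      fix R assume "R \<in> rev ` ?A"
      then obtain R0 where R0: "R0 \<in> ?A" "R = rev R0" by blast
      then have "R0 \<noteq> []" using len 3 by fastforce
      then show "R \<in> ?B" using R0 revPL by (simp add: hd_rev last_rev)
    next
      fix R assume R: "R \<in> ?B"
      then have "R \<noteq> []" using len 3 by fastforce
      then have "rev R \<in> ?A" using R revPL by (simp add: hd_rev last_rev)
      moreover have "R = rev (rev R)" by simp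
      ultimately show "R \<in> rev ` ?A" by blast
    qed
    have injA: "inj_on rev ?A" by (simp add: inj_on_def)
    have "card ?B = card ?A" using card_image[OF injA] revAB by simp
    moreover have "card (PL S) = card ?A + card ?B"
    proof -
      have "\<And>R. R \<in> PL S \<Longrightarrow> hd R < last R \<or> last R < hd R" using hdlast by (meson linorder_neqE_nat)
      then have eq: "PL S = ?A \<union> ?B" by blast
      have "card (?A \<union> ?B) = card ?A + card ?B" using fin by (intro card_Un_disjoint) auto
      moreover have "card (PL S) = card (?A \<union> ?B)" using eq by (rule arg_cong)
      ultimately show ?thesis by simp
    qed
    moreover have "card (PL S) \<le> card S * 2^(Suc k)" using PL_card[OF assms(1), of "Suc k"] 3 by simp
    ultimately have "2 * card ?A \<le> card S * 2 * 2^k" by simp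
    then have A: "card ?A \<le> card S * 2^k" by simp
    have "card (pedges ` PL S) \<le> card (pedges ` ?A)" using im fin by (intro card_mono) auto
    also have "\<dots> \<le> card ?A" using fin by (intro card_image_le) auto
    also have "\<dots> \<le> card S * 2^k" by (rule A)
    finally show ?thesis using 3 by (simp add: pcount_def)
  qed
qed

definition LF :: "nat set \<Rightarrow> nat set set set" where
  "LF A = {F. \<exists>Rs. distinct (concat Rs) \<and> set (concat Rs) = A \<and> [] \<notin> set Rs \<and>
                  F = \<Union> (pedges ` set Rs) \<and> ncross F}"

definition fLF :: "nat \<Rightarrow> nat" where "fLF n = card (LF {..<n})"

lemma LF_sub: "LF A \<subseteq> Pow (Pow A)"
proof
  fix F assume "F \<in> LF A"
  then obtain Rs where Rs: "set (concat Rs) = A" "F = \<Union> (pedges ` set Rs)" by (auto simp: LF_def)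
  have "\<And>r e. r \<in> set Rs \<Longrightarrow> e \<in> pedges r \<Longrightarrow> e \<subseteq> A"
    using Rs(1) pedges_subset by fastforce
  then show "F \<in> Pow (Pow A)" using Rs(2) by auto
qed

lemma LF_finite: "finite A \<Longrightarrow> finite (LF A)"
  using LF_sub by (meson finite_Pow_iff finite_subset)

lemma concat_disj:
  "distinct (concat Rs) \<Longrightarrow> r1 \<in> set Rs \<Longrightarrow> r2 \<in> set Rs \<Longrightarrow> r1 \<noteq> r2 \<Longrightarrow> set r1 \<inter> set r2 = {}"
  by (induction Rs) auto

lemma concat_dist: "distinct (concat Rs) \<Longrightarrow> r \<in> set Rs \<Longrightarrow> distinct r"
  by (induction Rs) auto

lemma concat_filter_dist: "distinct (concat Rs) \<Longrightarrow> distinct (concat (filter P Rs))"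
  by (induction Rs) auto

lemma ncross_image_shift:
  assumes "ncross F" "\<And>e. e \<in> F \<Longrightarrow> card e = 2"
  shows "ncross ((\<lambda>e. (+) c ` e) ` F)"
  unfolding ncross_def
proof (intro allI impI)
  fix a b x d
  assume h: "{a,b} \<in> (\<lambda>e. (+) c ` e) ` F" "{x,d} \<in> (\<lambda>e. (+) c ` e) ` F" "a < x" "x < b" "b < d"
  obtain e1 where e1: "e1 \<in> F" "{a,b} = (+) c ` e1" using h(1) by blast
  obtain e2 where e2: "e2 \<in> F" "{x,d} = (+) c ` e2" using h(2) by blast
  have "a \<in> (+) c ` e1" "b \<in> (+) c ` e1" using e1 by auto
  then have ab: "c \<le> a" "c \<le> b" by auto
  have "x \<in> (+) c ` e2" "d \<in> (+) c ` e2" using e2 by auto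
  then have xd: "c \<le> x" "c \<le> d" by auto
  have "e1 = {a - c, b - c}"
  proof
    show "e1 \<subseteq> {a - c, b - c}"
    proof
      fix y assume "y \<in> e1" then have "c + y \<in> {a,b}" using e1 by blast
      then show "y \<in> {a - c, b - c}" by auto
    qed
    show "{a - c, b - c} \<subseteq> e1"
    proof -
      have "a \<in> (+) c ` e1" "b \<in> (+) c ` e1" using e1 by auto
      then show ?thesis by auto
    qed
  qed
  moreover have "e2 = {x - c, d - c}"
  proof
    show "e2 \<subseteq> {x - c, d - c}"
    proof
      fix y assume "y \<in> e2" then have "c + y \<in> {x,d}" using e2 by blast
      then show "y \<in> {x - c, d - c}" by auto
    qed
    show "{x - c, d - c} \<subseteq> e2"
    proof -
      have "x \<in> (+) c ` e2" "d \<in> (+) c ` e2" using e2 by auto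
      then show ?thesis by auto
    qed
  qed
  ultimately have "{a - c, b - c} \<in> F" "{x - c, d - c} \<in> F" using e1 e2 by auto
  moreover have "a - c < x - c" "x - c < b - c" "b - c < d - c" using h ab xd by auto
  ultimately show False using assms(1) unfolding ncross_def by blast
qed

lemma pedges_card2': "distinct r \<Longrightarrow> e \<in> pedges r \<Longrightarrow> card e = 2"
  using pedges_card2 by fastforce

lemma LF_edges_card2: "F \<in> LF A \<Longrightarrow> e \<in> F \<Longrightarrow> card e = 2"
proof -
  assume "F \<in> LF A" "e \<in> F"
  then obtain Rs r where "distinct (concat Rs)" "r \<in> set Rs" "e \<in> pedges r" by (auto simp: LF_def)
  then show ?thesis using concat_dist pedges_card2' by blast
qed

lemma LF_shift_sub: "(\<lambda>F. (\<lambda>e. (+) c ` e) ` F) ` LF A \<subseteq> LF ((+) c ` A)"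
proof
  fix G assume "G \<in> (\<lambda>F. (\<lambda>e. (+) c ` e) ` F) ` LF A"
  then obtain F where F: "F \<in> LF A" "G = (\<lambda>e. (+) c ` e) ` F" by blast
  then obtain Rs where Rs: "distinct (concat Rs)" "set (concat Rs) = A" "[] \<notin> set Rs"
      "F = \<Union> (pedges ` set Rs)" "ncross F" by (auto simp: LF_def)
  let ?Rs = "map (map ((+) c)) Rs"
  have "distinct (concat ?Rs)" using Rs(1) by (simp add: map_concat[symmetric] distinct_map)
  moreover have "set (concat ?Rs) = (+) c ` A" using Rs(2) by (simp add: map_concat[symmetric])
  moreover have "[] \<notin> set ?Rs" using Rs(3) by auto
  moreover have "G = \<Union> (pedges ` set ?Rs)" using F(2) Rs(4) by (auto simp: pedges_map)
  moreover have "ncross G" using F(2) ncross_image_shift[OF Rs(5)] LF_edges_card2[OF F(1)] by blast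
  ultimately show "G \<in> LF ((+) c ` A)" unfolding LF_def by (intro CollectI exI[of _ ?Rs]) simp
qed

lemma LF_shift_sup: "LF ((+) c ` A) \<subseteq> (\<lambda>F. (\<lambda>e. (+) c ` e) ` F) ` LF A"
proof
  fix G assume G: "G \<in> LF ((+) c ` A)"
  then obtain Rs where Rs: "distinct (concat Rs)" "set (concat Rs) = (+) c ` A" "[] \<notin> set Rs"
      "G = \<Union> (pedges ` set Rs)" "ncross G" by (auto simp: LF_def)
  let ?Rs = "map (map (\<lambda>x. x - c)) Rs"
  have ge: "\<And>x. x \<in> set (concat Rs) \<Longrightarrow> c \<le> x"
  proof -
    fix x assume "x \<in> set (concat Rs)"
    then have "x \<in> (+) c ` A" by (simp only: Rs(2))
    then show "c \<le> x" by auto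
  qed
  have inj: "inj_on (\<lambda>x. x - c) (set (concat Rs))"
  proof (rule inj_onI)
    fix x y assume "x \<in> set (concat Rs)" "y \<in> set (concat Rs)" "x - c = y - c"
    moreover have "c \<le> x" "c \<le> y" using ge calculation by auto
    ultimately show "x = y" by simp
  qed
  have d1: "distinct (concat ?Rs)" using Rs(1) inj by (simp add: map_concat[symmetric] distinct_map)
  have s1: "set (concat ?Rs) = A"
  proof -
    have "set (concat ?Rs) = (\<lambda>x. x - c) ` (+) c ` A" using Rs(2) by (simp add: map_concat[symmetric])
    also have "\<dots> = A" by (auto simp: image_image)
    finally show ?thesis .
  qed
  have n1: "[] \<notin> set ?Rs" using Rs(3) by auto
  define F where "F = \<Union> (pedges ` set ?Rs)"
  have key: "\<And>r e. r \<in> set Rs \<Longrightarrow> e \<in> pedges r \<Longrightarrow> (+) c ` (\<lambda>x. x - c) ` e = e"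
  proof -
    fix r e assume "r \<in> set Rs" "e \<in> pedges r"
    then have "\<And>x. x \<in> e \<Longrightarrow> c \<le> x" using ge pedges_subset by fastforce
    then have "\<And>x. x \<in> e \<Longrightarrow> c + (x - c) = x" by simp
    then show "(+) c ` (\<lambda>x. x - c) ` e = e" by (force simp: image_image)
  qed
  have GF: "G = (\<lambda>e. (+) c ` e) ` F"
  proof -
    have "(\<lambda>e. (+) c ` e) ` F = (\<Union>r\<in>set Rs. (\<lambda>e. (+) c ` (\<lambda>x. x - c) ` e) ` pedges r)"
      unfolding F_def by (auto simp: pedges_map image_UN image_image)
    also have "\<dots> = (\<Union>r\<in>set Rs. pedges r)"
    proof (rule SUP_cong[OF refl])
      fix r assume r: "r \<in> set Rs"
      have "(\<lambda>e. (+) c ` (\<lambda>x. x - c) ` e) ` pedges r = id ` pedges r"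
        by (rule image_cong) (auto simp: key[OF r])
      then show "(\<lambda>e. (+) c ` (\<lambda>x. x - c) ` e) ` pedges r = pedges r" by simp
    qed
    finally show ?thesis using Rs(4) by simp
  qed
  have nF: "ncross F"
    unfolding ncross_def
  proof (intro allI impI)
    fix a b x d assume h: "{a,b} \<in> F" "{x,d} \<in> F" "a < x" "x < b" "b < d"
    have "(+) c ` {a,b} \<in> G" "(+) c ` {x,d} \<in> G" using h(1,2) GF by blast+
    then have m: "{c + a, c + b} \<in> G" "{c + x, c + d} \<in> G" by simp_all
    have "c+a < c+x" "c+x < c+b" "c+b < c+d" using h by auto
    then show False using Rs(5) m unfolding ncross_def by blast
  qed
  have "F \<in> LF A" unfolding LF_def
    using d1 s1 n1 nF by (intro CollectI exI[of _ ?Rs]) (simp add: F_def)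
  then show "G \<in> (\<lambda>F. (\<lambda>e. (+) c ` e) ` F) ` LF A" using GF by blast
qed

lemma LF_shift: "card (LF ((+) c ` A)) = card (LF A)"
proof -
  have eq: "LF ((+) c ` A) = (\<lambda>F. (\<lambda>e. (+) c ` e) ` F) ` LF A"
    using LF_shift_sub LF_shift_sup by blast
  have i1: "inj ((+) c)" by simp
  have i2: "inj (\<lambda>e. (+) c ` e)" by (rule injI) (simp add: inj_image_eq_iff[OF i1])
  have "inj (\<lambda>F. (\<lambda>e. (+) c ` e) ` F)" by (rule injI) (simp add: inj_image_eq_iff[OF i2])
  then show ?thesis unfolding eq by (simp add: card_image inj_on_subset)
qed

lemma LF_interval: "card (LF {a..<b}) = fLF (b - a)"
proof -
  have "{a..<b} = (+) a ` {..<b - a}"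
  proof
    show "{a..<b} \<subseteq> (+) a ` {..<b - a}"
    proof
      fix x assume "x \<in> {a..<b}"
      then have "x = a + (x - a)" "x - a \<in> {..<b - a}" by auto
      then show "x \<in> (+) a ` {..<b - a}" by blast
    qed
  qed auto
  then show ?thesis using LF_shift[of a "{..<b - a}"] by (simp add: fLF_def)
qed

lemma LF_empty: "LF {} = {{}}"
proof
  show "LF {} \<subseteq> {{}}"
  proof
    fix F assume "F \<in> LF {}"
    then obtain Rs where "set (concat Rs) = {}" "[] \<notin> set Rs" "F = \<Union> (pedges ` set Rs)"
      by (auto simp: LF_def)
    then have "Rs = []" by (cases Rs) auto
    then show "F \<in> {{}}" using \<open>F = _\<close> by simp
  qed
  show "{{}} \<subseteq> LF {}"
    by (auto simp: LF_def ncross_def intro!: exI[of _ "[]"])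
qed

lemma fLF_0: "fLF 0 = 1" by (simp add: fLF_def LF_empty)

definition gap :: "nat \<Rightarrow> nat set \<Rightarrow> nat \<Rightarrow> nat set" where
  "gap n S s = {x. s < x \<and> x < n \<and> (\<forall>t\<in>S. s < t \<longrightarrow> x < t)}"

lemma gap_interval:
  assumes "finite S" shows "gap n S s = {Suc s..<Min (insert n {t\<in>S. s < t})}"
proof -
  have fin: "finite (insert n {t\<in>S. s < t})" using assms by simp
  show ?thesis
  proof (rule set_eqI)
    fix x
    have "x < Min (insert n {t\<in>S. s < t}) \<longleftrightarrow> (\<forall>a\<in>insert n {t\<in>S. s < t}. x < a)"
      using Min_gr_iff[OF fin] by blast
    then show "x \<in> gap n S s \<longleftrightarrow> x \<in> {Suc s..<Min (insert n {t\<in>S. s < t})}"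
      unfolding gap_def by auto
  qed
qed

lemma card_LF_gap: "finite S \<Longrightarrow> card (LF (gap n S s)) = fLF (card (gap n S s))"
  using gap_interval LF_interval by simp

lemma gap_finite: "finite (gap n S s)"
  unfolding gap_def by (rule finite_subset[of _ "{..<n}"]) auto

lemma face:
  assumes d: "distinct (concat Rs)" and nc: "ncross (\<Union> (pedges ` set Rs))"
    and R: "R \<in> set Rs" and r: "r \<in> set Rs" "r \<noteq> R"
    and e: "{a,b} \<in> pedges r" "a < t" "t < b" and t: "t \<in> set R" and z: "z \<in> set R" "z < a"
  shows False
proof -
  have disj: "set r \<inter> set R = {}" using concat_disj[OF d r(1) R r(2)] .
  have ab: "a \<in> set r" "b \<in> set r" using pedges_subset[OF e(1)] by auto
  obtain i where i: "i < length R" "R!i = t" using t by (auto simp: in_set_conv_nth)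
  obtain j where j: "j < length R" "R!j = z" using z by (auto simp: in_set_conv_nth)
  let ?Q = "\<lambda>v. a < v \<and> v < b"
  have "?Q (R!i) \<noteq> ?Q (R!j)" using i j e z by auto
  then obtain k where k: "Suc k < length R" "?Q (R!k) \<noteq> ?Q (R!Suc k)"
    using change_point[OF i(1) j(1), of ?Q] by blast
  define v where "v = R!k"
  define w where "w = R!Suc k"
  have vw: "v \<in> set R" "w \<in> set R" using k(1) unfolding v_def w_def by auto
  have nab: "v \<noteq> a" "v \<noteq> b" "w \<noteq> a" "w \<noteq> b" using vw ab disj by auto
  have F1: "{a,b} \<in> \<Union> (pedges ` set Rs)" using e(1) r(1) by blast
  have "{v,w} \<in> pedges R" using k(1) unfolding v_def w_def by (auto simp: pedges_def)
  then have F2: "{v,w} \<in> \<Union> (pedges ` set Rs)" "{w,v} \<in> \<Union> (pedges ` set Rs)"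
    using R by (auto simp: insert_commute)
  have kq: "?Q v \<noteq> ?Q w" using k unfolding v_def w_def by simp
  have ab2: "a < b" using e by simp
  show False
  proof (cases "?Q v")
    case True
    then have "\<not> ?Q w" using kq by blast
    then have "w < a \<or> b < w" using nab by auto
    then show False using straddle[OF nc F1 F2(1)] True by blast
  next
    case False
    then have q: "?Q w" using kq by blast
    have "v < a \<or> b < v" using False nab by auto
    then show False using straddle[OF nc F1 F2(2)] q by blast
  qed
qed

lemma same_gap:
  assumes d: "distinct (concat Rs)" and nc: "ncross (\<Union> (pedges ` set Rs))"
    and R: "R \<in> set Rs" and r: "r \<in> set Rs" "r \<noteq> R"
    and xy: "x \<in> set r" "y \<in> set r" "x < t" "t < y" and t: "t \<in> set R" and z: "0 \<in> set R"
  shows False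
proof -
  have disj: "set r \<inter> set R = {}" using concat_disj[OF d r(1) R r(2)] .
  obtain i where i: "i < length r" "r!i = x" using xy by (auto simp: in_set_conv_nth)
  obtain j where j: "j < length r" "r!j = y" using xy by (auto simp: in_set_conv_nth)
  let ?Q = "\<lambda>v. v < t"
  have "?Q (r!i) \<noteq> ?Q (r!j)" using i j xy by auto
  then obtain k where k: "Suc k < length r" "?Q (r!k) \<noteq> ?Q (r!Suc k)"
    using change_point[OF i(1) j(1), of ?Q] by blast
  define v where "v = r!k"
  define w where "w = r!Suc k"
  have vw: "v \<in> set r" "w \<in> set r" using k(1) unfolding v_def w_def by auto
  have nt: "v \<noteq> t" "w \<noteq> t" using vw t disj by auto
  have e1: "{v,w} \<in> pedges r" "{w,v} \<in> pedges r" using k(1) unfolding v_def w_def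
    by (auto simp: pedges_def insert_commute)
  have pos: "0 < v" "0 < w" using vw z disj by (auto intro: gr0I)
  have kq: "?Q v \<noteq> ?Q w" using k unfolding v_def w_def by simp
  show False
  proof (cases "v < t")
    case True
    then have "t < w" using kq nt by auto
    then show False using face[OF d nc R r e1(1) True _ t z] pos by blast
  next
    case False
    then have "w < t" "t < v" using kq nt by auto
    then show False using face[OF d nc R r e1(2) _ _ t z] pos by blast
  qed
qed

lemma run_gap:
  assumes d: "distinct (concat Rs)" and nc: "ncross (\<Union> (pedges ` set Rs))"
    and A: "set (concat Rs) = {..<n}"
    and R: "R \<in> set Rs" and z: "0 \<in> set R"
    and r: "r \<in> set Rs" and x: "x \<in> set r" "x \<in> gap n (set R) s" and s: "s \<in> set R"
  shows "set r \<subseteq> gap n (set R) s"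
proof
  have xS: "x \<notin> set R" using x(2) unfolding gap_def by auto
  then have rR: "r \<noteq> R" using x(1) by auto
  have disj: "set r \<inter> set R = {}" using concat_disj[OF d r R rR] .
  fix y assume y: "y \<in> set r"
  have yn: "y < n"
  proof -
    have "y \<in> set (concat Rs)" using y r by auto
    then show ?thesis using A by auto
  qed
  have yS: "y \<notin> set R" using y disj by auto
  have sy: "s < y"
  proof (rule ccontr)
    assume "\<not> s < y"
    then have "y < s" using yS s by (auto simp: not_less_iff_gr_or_eq)
    moreover have "s < x" using x(2) by (auto simp: gap_def)
    ultimately show False using same_gap[OF d nc R r rR y x(1) _ _ s z] by blast
  qed
  have "\<forall>t\<in>set R. s < t \<longrightarrow> y < t"
  proof (intro ballI impI, rule ccontr)
    fix t assume t: "t \<in> set R" "s < t" "\<not> y < t"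
    then have "t < y" using yS by (auto simp: not_less_iff_gr_or_eq)
    moreover have "x < t" using x(2) t by (auto simp: gap_def)
    ultimately show False using same_gap[OF d nc R r rR x(1) y _ _ t(1) z] by blast
  qed
  then show "y \<in> gap n (set R) s" using sy yn by (auto simp: gap_def)
qed

lemma some_gap:
  assumes "finite S" "0 \<in> S" "x < n" "x \<notin> S"
  shows "\<exists>s\<in>S. x \<in> gap n S s"
proof -
  let ?T = "{t\<in>S. t < x}"
  have x0: "0 < x" using assms by (auto intro: gr0I)
  have T: "finite ?T" "?T \<noteq> {}" using assms x0 by auto
  define s where "s = Max ?T"
  have sT: "s \<in> ?T" unfolding s_def using T by (rule Max_in)
  have "\<forall>t\<in>S. s < t \<longrightarrow> x < t"
  proof (intro ballI impI, rule ccontr)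
    fix t assume t: "t \<in> S" "s < t" "\<not> x < t"
    then have "t < x" using assms by (auto simp: not_less_iff_gr_or_eq)
    then have "t \<le> s" unfolding s_def using T t by (intro Max_ge) auto
    then show False using t by simp
  qed
  then have "x \<in> gap n S s" using sT assms by (auto simp: gap_def)
  then show ?thesis using sT by blast
qed

lemma decomp_mem:
  assumes F: "F \<in> LF {..<n}" and n: "0 < n"
  shows "\<exists>S. S \<subseteq> {..<n} \<and> 0 \<in> S \<and>
     F \<in> (\<lambda>(P,H). P \<union> \<Union> (H ` S)) ` (pedges ` PL S \<times> (\<Pi>\<^sub>E s\<in>S. LF (gap n S s)))"
proof -
  obtain Rs where Rs: "distinct (concat Rs)" "set (concat Rs) = {..<n}" "[] \<notin> set Rs"
      "F = \<Union> (pedges ` set Rs)" "ncross F" using F by (auto simp: LF_def)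
  have nc: "ncross (\<Union> (pedges ` set Rs))" using Rs by simp
  have "0 \<in> set (concat Rs)" using Rs(2) n by simp
  then obtain R where R: "R \<in> set Rs" "0 \<in> set R" by auto
  define S where "S = set R"
  have SA: "S \<subseteq> {..<n}" using Rs(2) R unfolding S_def by auto
  have finS: "finite S" unfolding S_def by simp
  have dR: "distinct R" using concat_dist[OF Rs(1) R(1)] .
  have pR: "pedges R \<subseteq> F" using Rs(4) R by auto
  have RPL: "R \<in> PL S" unfolding PL_def S_def using dR ncross_mono[OF Rs(5) pR] by simp
  define H where "H = (\<lambda>s\<in>S. {e\<in>F. e \<subseteq> gap n S s})"
  have rg: "\<And>r x s. r \<in> set Rs \<Longrightarrow> x \<in> set r \<Longrightarrow> x \<in> gap n S s \<Longrightarrow> s \<in> S \<Longrightarrow> set r \<subseteq> gap n S s"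
    unfolding S_def using run_gap[OF Rs(1) nc Rs(2) R] by blast
  have HLF: "H \<in> (\<Pi>\<^sub>E s\<in>S. LF (gap n S s))"
  proof (rule PiE_I)
    fix s assume s: "s \<in> S"
    let ?G = "gap n S s"
    let ?Rs = "filter (\<lambda>r. set r \<subseteq> ?G) Rs"
    have d1: "distinct (concat ?Rs)" using concat_filter_dist[OF Rs(1)] .
    have s1: "set (concat ?Rs) = ?G"
    proof
      show "set (concat ?Rs) \<subseteq> ?G" by auto
      show "?G \<subseteq> set (concat ?Rs)"
      proof
        fix x assume x: "x \<in> ?G"
        then have "x \<in> set (concat Rs)" using Rs(2) by (auto simp: gap_def)
        then obtain r where r: "r \<in> set Rs" "x \<in> set r" by auto
        then have "set r \<subseteq> ?G" using rg x s by blast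
        then show "x \<in> set (concat ?Rs)" using r by auto
      qed
    qed
    have n1: "[] \<notin> set ?Rs" using Rs(3) by auto
    have e1: "{e\<in>F. e \<subseteq> ?G} = \<Union> (pedges ` set ?Rs)"
    proof
      show "\<Union> (pedges ` set ?Rs) \<subseteq> {e\<in>F. e \<subseteq> ?G}"
        using Rs(4) pedges_subset by fastforce
      show "{e\<in>F. e \<subseteq> ?G} \<subseteq> \<Union> (pedges ` set ?Rs)"
      proof
        fix e assume e: "e \<in> {e\<in>F. e \<subseteq> ?G}"
        then obtain r where r: "r \<in> set Rs" "e \<in> pedges r" using Rs(4) by auto
        obtain a b where ab: "e = {a,b}" using pedges_card2[OF r(2) concat_dist[OF Rs(1) r(1)]] by blast
        have "a \<in> set r" "a \<in> ?G" using ab e pedges_subset[OF r(2)] by auto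
        then have "set r \<subseteq> ?G" using rg r s by blast
        then show "e \<in> \<Union> (pedges ` set ?Rs)" using r by auto
      qed
    qed
    have nc1: "ncross {e\<in>F. e \<subseteq> ?G}" using Rs(5) by (rule ncross_mono) auto
    have "{e\<in>F. e \<subseteq> ?G} \<in> LF ?G" unfolding LF_def
      using d1 s1 n1 e1 nc1 by (intro CollectI exI[of _ ?Rs]) simp
    then show "H s \<in> LF (gap n S s)" using s by (simp add: H_def)
  next
    fix s assume "s \<notin> S" then show "H s = undefined" by (simp add: H_def)
  qed
  have PF: "F = pedges R \<union> \<Union> (H ` S)"
  proof
    show "pedges R \<union> \<Union> (H ` S) \<subseteq> F" using pR by (auto simp: H_def)
    show "F \<subseteq> pedges R \<union> \<Union> (H ` S)"
    proof
      fix e assume e: "e \<in> F"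
      then obtain r where r: "r \<in> set Rs" "e \<in> pedges r" using Rs(4) by auto
      show "e \<in> pedges R \<union> \<Union> (H ` S)"
      proof (cases "r = R")
        case True then show ?thesis using r by simp
      next
        case False
        have disj: "set r \<inter> S = {}" unfolding S_def using concat_disj[OF Rs(1) r(1) R(1) False] .
        obtain a b where ab: "e = {a,b}" using pedges_card2[OF r(2) concat_dist[OF Rs(1) r(1)]] by blast
        have ar: "a \<in> set r" using ab pedges_subset[OF r(2)] by auto
        then have aS: "a \<notin> S" using disj by auto
        have "a \<in> set (concat Rs)" using ar r by auto
        then have an: "a < n" using Rs(2) by auto
        obtain s where s: "s \<in> S" "a \<in> gap n S s"
          using some_gap[OF finS _ an aS] R(2) unfolding S_def by blast
        have "set r \<subseteq> gap n S s" using rg[OF r(1) ar s(2) s(1)] .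
        then have "e \<subseteq> gap n S s" using pedges_subset[OF r(2)] by blast
        then have "e \<in> H s" using e s by (simp add: H_def)
        then show ?thesis using s by blast
      qed
    qed
  qed
  have "F \<in> (\<lambda>(P,H). P \<union> \<Union> (H ` S)) ` (pedges ` PL S \<times> (\<Pi>\<^sub>E s\<in>S. LF (gap n S s)))"
  proof (rule image_eqI[of _ _ "(pedges R, H)"])
    show "F = (case (pedges R, H) of (P, H) \<Rightarrow> P \<union> \<Union> (H ` S))" using PF by simp
    show "(pedges R, H) \<in> pedges ` PL S \<times> (\<Pi>\<^sub>E s\<in>S. LF (gap n S s))" using RPL HLF by blast
  qed
  then show ?thesis using SA R(2) unfolding S_def by blast
qed

lemma fLF_decomp:
  assumes n: "0 < n"
  shows "fLF n \<le> (\<Sum>S\<in>{S. S \<subseteq> {..<n} \<and> 0 \<in> S}. pcount (card S) * (\<Prod>s\<in>S. fLF (card (gap n S s))))"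
proof -
  let ?SS = "{S. S \<subseteq> {..<n} \<and> 0 \<in> S}"
  let ?img = "\<lambda>S. (\<lambda>(P,H). P \<union> \<Union> (H ` S)) ` (pedges ` PL S \<times> (\<Pi>\<^sub>E s\<in>S. LF (gap n S s)))"
  have finSS: "finite ?SS" by (rule finite_subset[of _ "Pow {..<n}"]) auto
  have sub: "LF {..<n} \<subseteq> (\<Union>S\<in>?SS. ?img S)"
  proof
    fix F assume F: "F \<in> LF {..<n}"
    have "\<exists>S. S \<subseteq> {..<n} \<and> 0 \<in> S \<and> F \<in> ?img S" by (rule decomp_mem[OF F n])
    then obtain S where S: "S \<subseteq> {..<n} \<and> 0 \<in> S \<and> F \<in> ?img S" by (rule exE)
    then have "S \<in> ?SS" by simp
    moreover have "F \<in> ?img S" using S by (rule conjunct2[OF conjunct2])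
    ultimately show "F \<in> (\<Union>S\<in>?SS. ?img S)" by (rule UN_I)
  qed
  have fin_dom: "\<And>S. S \<in> ?SS \<Longrightarrow> finite (pedges ` PL S \<times> (\<Pi>\<^sub>E s\<in>S. LF (gap n S s)))"
  proof -
    fix S assume "S \<in> ?SS"
    then have fS: "finite S" by (auto intro: finite_subset)
    have "finite (pedges ` PL S)" using PL_finite[OF fS] by simp
    moreover have "finite (\<Pi>\<^sub>E s\<in>S. LF (gap n S s))"
      using fS by (intro finite_PiE) (auto intro: LF_finite gap_finite)
    ultimately show "finite (pedges ` PL S \<times> (\<Pi>\<^sub>E s\<in>S. LF (gap n S s)))" by simp
  qed
  have finU: "finite (\<Union>S\<in>?SS. ?img S)"
  proof (rule finite_UN_I[OF finSS])
    fix S assume "S \<in> ?SS" then show "finite (?img S)" using fin_dom by blast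
  qed
  have "fLF n \<le> card (\<Union>S\<in>?SS. ?img S)"
    unfolding fLF_def using finU sub by (rule card_mono)
  also have "\<dots> \<le> (\<Sum>S\<in>?SS. card (?img S))" by (rule card_UN_le[OF finSS])
  also have "\<dots> \<le> (\<Sum>S\<in>?SS. pcount (card S) * (\<Prod>s\<in>S. fLF (card (gap n S s))))"
  proof (rule sum_mono)
    fix S assume S: "S \<in> ?SS"
    then have fS: "finite S" and ne: "S \<noteq> {}" by (auto intro: finite_subset)
    have "card (?img S) \<le> card (pedges ` PL S \<times> (\<Pi>\<^sub>E s\<in>S. LF (gap n S s)))"
      by (rule card_image_le[OF fin_dom[OF S]])
    also have "\<dots> = card (pedges ` PL S) * (\<Prod>s\<in>S. card (LF (gap n S s)))"
      by (simp add: card_cartesian_product card_PiE[OF fS])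
    also have "\<dots> = card (pedges ` PL S) * (\<Prod>s\<in>S. fLF (card (gap n S s)))"
      using card_LF_gap[OF fS] by simp
    also have "\<dots> \<le> pcount (card S) * (\<Prod>s\<in>S. fLF (card (gap n S s)))"
      using paths_card[OF fS ne] by simp
    finally show "card (?img S) \<le> pcount (card S) * (\<Prod>s\<in>S. fLF (card (gap n S s)))" .
  qed
  finally show ?thesis .
qed

definition hh :: "real \<Rightarrow> nat \<Rightarrow> real" where "hh z g = z^(Suc g) * real (fLF g)"

definition Qi :: "real \<Rightarrow> nat \<Rightarrow> nat \<Rightarrow> nat \<Rightarrow> real" where
  "Qi z a n k = (\<Sum>S\<in>{S. S \<subseteq> {a..<n} \<and> a \<in> S \<and> card S = k}. \<Prod>s\<in>S. hh z (card (gap n S s)))"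

lemma hh_nonneg: "0 \<le> z \<Longrightarrow> 0 \<le> hh z g" by (simp add: hh_def)

lemma Qi_nonneg: "0 \<le> z \<Longrightarrow> 0 \<le> Qi z a n k"
  unfolding Qi_def by (intro sum_nonneg prod_nonneg hh_nonneg)

lemma Qi_empty: "Qi z a a k = 0" by (simp add: Qi_def)

lemma Qi_one: assumes "a < n" shows "Qi z a n 1 = hh z (n - Suc a)"
proof -
  have I: "{S. S \<subseteq> {a..<n} \<and> a \<in> S \<and> card S = 1} = {{a}}"
  proof
    show "{S. S \<subseteq> {a..<n} \<and> a \<in> S \<and> card S = 1} \<subseteq> {{a}}"
    proof
      fix S assume "S \<in> {S. S \<subseteq> {a..<n} \<and> a \<in> S \<and> card S = 1}"
      then have "a \<in> S" "card S = 1" by auto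
      then show "S \<in> {{a}}" by (auto simp: card_1_singleton_iff)
    qed
    show "{{a}} \<subseteq> {S. S \<subseteq> {a..<n} \<and> a \<in> S \<and> card S = 1}" using assms by auto
  qed
  have "gap n {a} a = {Suc a..<n}" by (auto simp: gap_def)
  then show ?thesis unfolding Qi_def I by simp
qed

lemma Qi_suc:
  assumes k: "1 \<le> k"
  shows "Qi z a n (Suc k) = (\<Sum>c\<in>{a<..<n}. hh z (c - Suc a) * Qi z c n k)"
proof -
  let ?I = "{S. S \<subseteq> {a..<n} \<and> a \<in> S \<and> card S = Suc k}"
  let ?J = "\<lambda>c. {S. S \<subseteq> {c..<n} \<and> c \<in> S \<and> card S = k}"
  let ?f = "\<lambda>S. \<Prod>s\<in>S. hh z (card (gap n S s))"
  have Ieq: "?I = (\<Union>c\<in>{a<..<n}. insert a ` ?J c)"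
  proof
    show "?I \<subseteq> (\<Union>c\<in>{a<..<n}. insert a ` ?J c)"
    proof
      fix S assume S: "S \<in> ?I"
      let ?S' = "S - {a}"
      have fS: "finite S" using S by (auto intro: finite_subset)
      have cS': "card ?S' = k" using S fS by simp
      have ne: "?S' \<noteq> {}"
      proof
        assume h: "?S' = {}"
        have "card ?S' = card ({}::nat set)" using h by (rule arg_cong)
        then show False using cS' k by simp
      qed
      define c where "c = Min ?S'"
      have cin: "c \<in> ?S'" unfolding c_def using fS ne by (intro Min_in) auto
      have cle: "\<And>t. t \<in> ?S' \<Longrightarrow> c \<le> t" unfolding c_def using fS by (intro Min_le) auto
      have ca: "a < c" "c < n" using cin S by auto
      have "?S' \<subseteq> {c..<n}"
      proof
        fix x assume x: "x \<in> ?S'"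
        then have "c \<le> x" by (rule cle)
        moreover have "x < n" using x S by auto
        ultimately show "x \<in> {c..<n}" by simp
      qed
      then have "?S' \<in> ?J c" using cin cS' by blast
      moreover have "S = insert a ?S'" using S by auto
      ultimately have "S \<in> insert a ` ?J c" by (intro image_eqI)
      moreover have "c \<in> {a<..<n}" using ca by simp
      ultimately show "S \<in> (\<Union>c\<in>{a<..<n}. insert a ` ?J c)" by (intro UN_I)
    qed
    show "(\<Union>c\<in>{a<..<n}. insert a ` ?J c) \<subseteq> ?I"
    proof
      fix S assume "S \<in> (\<Union>c\<in>{a<..<n}. insert a ` ?J c)"
      then obtain c where c0: "c \<in> {a<..<n}" and Sin: "S \<in> insert a ` ?J c" by (rule UN_E)
      from Sin obtain S' where S: "S = insert a S'" and S': "S' \<in> ?J c" by (rule imageE)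
      have c: "a < c" "c < n" using c0 by auto
      have S'c: "S' \<subseteq> {c..<n}" "card S' = k" using S' by auto
      have aS': "a \<notin> S'" using S'c(1) c by auto
      have fS': "finite S'" using S'c(1) by (rule finite_subset) simp
      have "card S = Suc k" unfolding S using aS' fS' S'c(2) by simp
      moreover have "S \<subseteq> {a..<n}" unfolding S using S'c(1) c by auto
      moreover have "a \<in> S" unfolding S by simp
      ultimately show "S \<in> ?I" by simp
    qed
  qed
  have finJ: "\<And>c. finite (?J c)" by (rule finite_subset[of _ "Pow {..<n}"]) auto
  have disj: "\<And>c1 c2. c1 \<in> {a<..<n} \<Longrightarrow> c2 \<in> {a<..<n} \<Longrightarrow> c1 \<noteq> c2 \<Longrightarrow> insert a ` ?J c1 \<inter> insert a ` ?J c2 = {}"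
  proof (rule ccontr)
    fix c1 c2 assume c: "c1 \<in> {a<..<n}" "c2 \<in> {a<..<n}" "c1 \<noteq> c2" "insert a ` ?J c1 \<inter> insert a ` ?J c2 \<noteq> {}"
    then obtain S1 S2 where S: "S1 \<in> ?J c1" "S2 \<in> ?J c2" "insert a S1 = insert a S2" by blast
    have "a \<notin> S1" "a \<notin> S2" using S c by auto
    then have "S1 = S2" using S(3) by (metis insert_ident)
    then have "c1 \<in> S2" "c2 \<in> S2" "S2 \<subseteq> {c1..<n}" "S2 \<subseteq> {c2..<n}" using S by auto
    then show False using c(3) by fastforce
  qed
  have inj: "\<And>c. c \<in> {a<..<n} \<Longrightarrow> inj_on (insert a) (?J c)"
  proof (rule inj_onI)
    fix c S1 S2 assume "c \<in> {a<..<n}" "S1 \<in> ?J c" "S2 \<in> ?J c" "insert a S1 = insert a S2"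
    moreover then have "a \<notin> S1" "a \<notin> S2" by auto
    ultimately show "S1 = S2" by (metis insert_ident)
  qed
  have fins: "\<forall>c\<in>{a<..<n}. finite (insert a ` ?J c)" using finJ by simp
  have disj': "\<forall>c1\<in>{a<..<n}. \<forall>c2\<in>{a<..<n}. c1 \<noteq> c2 \<longrightarrow> insert a ` ?J c1 \<inter> insert a ` ?J c2 = {}"
    using disj by blast
  have "Qi z a n (Suc k) = sum ?f (\<Union>c\<in>{a<..<n}. insert a ` ?J c)" unfolding Qi_def Ieq ..
  also have "\<dots> = (\<Sum>c\<in>{a<..<n}. sum ?f (insert a ` ?J c))"
    by (rule sum.UNION_disjoint[OF finite_greaterThanLessThan fins disj'])
  also have "\<dots> = (\<Sum>c\<in>{a<..<n}. \<Sum>S'\<in>?J c. ?f (insert a S'))"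
  proof (rule sum.cong[OF refl])
    fix c assume c: "c \<in> {a<..<n}"
    show "sum ?f (insert a ` ?J c) = (\<Sum>S'\<in>?J c. ?f (insert a S'))"
      using sum.reindex[OF inj[OF c], of ?f] by simp
  qed
  also have "\<dots> = (\<Sum>c\<in>{a<..<n}. hh z (c - Suc a) * Qi z c n k)"
  proof (rule sum.cong[OF refl])
    fix c assume c: "c \<in> {a<..<n}"
    have "(\<Sum>S'\<in>?J c. ?f (insert a S')) = (\<Sum>S'\<in>?J c. hh z (c - Suc a) * (\<Prod>s\<in>S'. hh z (card (gap n S' s))))"
    proof (rule sum.cong[OF refl])
      fix S' assume S': "S' \<in> ?J c"
      have aS': "a \<notin> S'" using S' c by auto
      have fS': "finite S'" using S' by (auto intro: finite_subset)
      have g1: "gap n (insert a S') a = {Suc a..<c}"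
        using S' c by (auto simp: gap_def)
      have g2: "\<And>s. s \<in> S' \<Longrightarrow> gap n (insert a S') s = gap n S' s"
        using S' c by (auto simp: gap_def)
      have "?f (insert a S') = hh z (card (gap n (insert a S') a)) * (\<Prod>s\<in>S'. hh z (card (gap n (insert a S') s)))"
        using aS' fS' by simp
      also have "\<dots> = hh z (c - Suc a) * (\<Prod>s\<in>S'. hh z (card (gap n S' s)))"
        using g1 g2 by simp
      finally show "?f (insert a S') = hh z (c - Suc a) * (\<Prod>s\<in>S'. hh z (card (gap n S' s)))" .
    qed
    also have "\<dots> = hh z (c - Suc a) * Qi z c n k" unfolding Qi_def by (simp add: sum_distrib_left)
    finally show "(\<Sum>S'\<in>?J c. ?f (insert a S')) = hh z (c - Suc a) * Qi z c n k" .
  qed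
  finally show ?thesis .
qed

lemma inner_eq:
  "(\<Sum>c\<in>{a<..<a+m}. hh z (c - Suc a) * Qi z c (a+m) k) = (\<Sum>g<m. hh z g * Qi z (Suc (a+g)) (a+m) k)"
proof (cases m)
  case 0 then show ?thesis by simp
next
  case (Suc m')
  have "{a<..<a+m} = (\<lambda>g. Suc (a+g)) ` {..<m'}"
  proof
    show "{a<..<a+m} \<subseteq> (\<lambda>g. Suc (a+g)) ` {..<m'}"
    proof
      fix c assume "c \<in> {a<..<a+m}"
      then have "c = Suc (a + (c - Suc a))" "c - Suc a < m'" using Suc by auto
      then show "c \<in> (\<lambda>g. Suc (a+g)) ` {..<m'}" by blast
    qed
  qed (use Suc in auto)
  then have "(\<Sum>c\<in>{a<..<a+m}. hh z (c - Suc a) * Qi z c (a+m) k) = (\<Sum>g<m'. hh z g * Qi z (Suc (a+g)) (a+m) k)"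
    by (simp add: sum.reindex inj_on_def)
  also have "\<dots> = (\<Sum>g<m. hh z g * Qi z (Suc (a+g)) (a+m) k)"
    using Suc by (simp add: Qi_empty)
  finally show ?thesis .
qed

lemma sum_shift_atMost:
  "g < N \<Longrightarrow> (\<Sum>m\<in>{Suc g..N}. F m) = (\<Sum>m'\<le>N - Suc g. F (Suc g + m'))"
  by (rule sum.reindex_bij_witness[where j="\<lambda>m. m - Suc g" and i="\<lambda>m'. Suc g + m'"]) auto

lemma partial_mono: "0 \<le> z \<Longrightarrow> M \<le> N \<Longrightarrow> (\<Sum>g<M. hh z g) \<le> (\<Sum>g<N. hh z g)"
  by (intro sum_mono2) (auto intro: hh_nonneg)

lemma Q_sum_bound:
  assumes k: "1 \<le> k" and z: "0 \<le> z"
  shows "(\<Sum>m\<le>N. Qi z a (a+m) k) \<le> (\<Sum>g<N. hh z g)^k"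
  using k
proof (induction k arbitrary: a N rule: nat_induct_at_least)
  case base
  have "(\<Sum>m\<le>N. Qi z a (a+m) 1) = (\<Sum>g<N. hh z g)"
  proof (induction N)
    case 0 then show ?case by (simp add: Qi_empty)
  next
    case (Suc N)
    have "(\<Sum>m\<le>Suc N. Qi z a (a+m) 1) = (\<Sum>m\<le>N. Qi z a (a+m) 1) + Qi z a (a + Suc N) 1" by simp
    also have "Qi z a (a + Suc N) 1 = hh z N" using Qi_one[of a "a + Suc N" z] by simp
    also have "(\<Sum>m\<le>N. Qi z a (a+m) 1) = (\<Sum>g<N. hh z g)" by (rule Suc.IH)
    finally show ?case by simp
  qed
  then show ?case by simp
next
  case (Suc k)
  let ?T = "\<lambda>N. (\<Sum>g<N. hh z g)"
  have "(\<Sum>m\<le>N. Qi z a (a+m) (Suc k)) = (\<Sum>m\<le>N. \<Sum>g<m. hh z g * Qi z (Suc (a+g)) (a+m) k)"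
    using Qi_suc[OF Suc.hyps(1)] inner_eq by simp
  also have "\<dots> = (\<Sum>g<N. \<Sum>m\<in>{Suc g..N}. hh z g * Qi z (Suc (a+g)) (a+m) k)"
    by (rule sum.nested_swap')
  also have "\<dots> = (\<Sum>g<N. hh z g * (\<Sum>m'\<le>N - Suc g. Qi z (Suc (a+g)) (Suc (a+g) + m') k))"
  proof (rule sum.cong[OF refl])
    fix g assume "g \<in> {..<N}"
    then have "(\<Sum>m\<in>{Suc g..N}. hh z g * Qi z (Suc (a+g)) (a+m) k) = (\<Sum>m'\<le>N - Suc g. hh z g * Qi z (Suc (a+g)) (a+(Suc g + m')) k)"
      by (intro sum_shift_atMost) simp
    also have "\<dots> = hh z g * (\<Sum>m'\<le>N - Suc g. Qi z (Suc (a+g)) (Suc (a+g) + m') k)"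
      by (simp add: sum_distrib_left add_ac)
    finally show "(\<Sum>m\<in>{Suc g..N}. hh z g * Qi z (Suc (a+g)) (a+m) k) = hh z g * (\<Sum>m'\<le>N - Suc g. Qi z (Suc (a+g)) (Suc (a+g) + m') k)" .
  qed
  also have "\<dots> \<le> (\<Sum>g<N. hh z g * (?T N)^k)"
  proof (rule sum_mono)
    fix g assume "g \<in> {..<N}"
    have "(\<Sum>m'\<le>N - Suc g. Qi z (Suc (a+g)) (Suc (a+g) + m') k) \<le> (?T (N - Suc g))^k" by (rule Suc.IH)
    also have "\<dots> \<le> (?T N)^k"
      by (intro power_mono partial_mono z) (auto intro: sum_nonneg hh_nonneg z)
    finally show "hh z g * (\<Sum>m'\<le>N - Suc g. Qi z (Suc (a+g)) (Suc (a+g) + m') k) \<le> hh z g * (?T N)^k"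
      by (intro mult_left_mono hh_nonneg z)
  qed
  also have "\<dots> = (?T N)^(Suc k)" by (simp add: sum_distrib_right[symmetric])
  finally show ?case .
qed

lemma gap_partition:
  assumes S: "S \<subseteq> {..<n}" "0 \<in> S"
  shows "(\<Sum>s\<in>S. Suc (card (gap n S s))) = n"
proof -
  have fS: "finite S" using S by (auto intro: finite_subset)
  have U: "{..<n} = S \<union> (\<Union>s\<in>S. gap n S s)"
  proof
    show "{..<n} \<subseteq> S \<union> (\<Union>s\<in>S. gap n S s)"
    proof
      fix x assume x: "x \<in> {..<n}"
      show "x \<in> S \<union> (\<Union>s\<in>S. gap n S s)"
      proof (cases "x \<in> S")
        case False
        then obtain s where "s \<in> S" "x \<in> gap n S s" using some_gap[OF fS S(2)] x by auto
        then show ?thesis by blast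
      qed simp
    qed
    show "S \<union> (\<Union>s\<in>S. gap n S s) \<subseteq> {..<n}" using S by (auto simp: gap_def)
  qed
  have d1: "S \<inter> (\<Union>s\<in>S. gap n S s) = {}" by (auto simp: gap_def)
  have d2: "\<forall>s\<in>S. \<forall>s'\<in>S. s \<noteq> s' \<longrightarrow> gap n S s \<inter> gap n S s' = {}"
  proof (intro ballI impI)
    fix s s' assume ss: "s \<in> S" "s' \<in> S" "s \<noteq> s'"
    show "gap n S s \<inter> gap n S s' = {}"
    proof (cases "s < s'")
      case True then show ?thesis using ss by (auto simp: gap_def)
    next
      case False then have "s' < s" using ss by simp
      then show ?thesis using ss by (auto simp: gap_def)
    qed
  qed
  have "n = card (S \<union> (\<Union>s\<in>S. gap n S s))" using U by (metis card_lessThan)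
  also have "\<dots> = card S + card (\<Union>s\<in>S. gap n S s)"
    using fS d1 by (intro card_Un_disjoint) (auto intro: gap_finite)
  also have "card (\<Union>s\<in>S. gap n S s) = (\<Sum>s\<in>S. card (gap n S s))"
    using fS d2 by (intro card_UN_disjoint) (auto intro: gap_finite)
  finally have "n = card S + (\<Sum>s\<in>S. card (gap n S s))" .
  moreover have "(\<Sum>s\<in>S. Suc (card (gap n S s))) = (\<Sum>s\<in>S. card (gap n S s)) + card S" by (rule sum_Suc)
  ultimately show ?thesis by simp
qed

lemma decomp_real:
  assumes n: "0 < n" and z: "0 < z"
  shows "real (fLF n) * z^n \<le> (\<Sum>k\<in>{1..n}. real (pcount k) * Qi z 0 n k)"
proof -
  let ?SS = "{S. S \<subseteq> {..<n} \<and> 0 \<in> S}"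
  have finSS: "finite ?SS" by (rule finite_subset[of _ "Pow {..<n}"]) auto
  have "real (fLF n) \<le> real (\<Sum>S\<in>?SS. pcount (card S) * (\<Prod>s\<in>S. fLF (card (gap n S s))))"
    using fLF_decomp[OF n] by (simp only: of_nat_le_iff)
  then have "real (fLF n) * z^n \<le> (\<Sum>S\<in>?SS. real (pcount (card S)) * (\<Prod>s\<in>S. real (fLF (card (gap n S s))))) * z^n"
    using z by (simp add: of_nat_mult of_nat_prod)
  also have "\<dots> = (\<Sum>S\<in>?SS. real (pcount (card S)) * (\<Prod>s\<in>S. hh z (card (gap n S s))))"
  proof -
    have "\<And>S. S \<in> ?SS \<Longrightarrow> (\<Prod>s\<in>S. real (fLF (card (gap n S s)))) * z^n = (\<Prod>s\<in>S. hh z (card (gap n S s)))"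
    proof -
      fix S assume S: "S \<in> ?SS"
      have "z^n = z^(\<Sum>s\<in>S. Suc (card (gap n S s)))" using gap_partition[of S n] S by simp
      also have "\<dots> = (\<Prod>s\<in>S. z^(Suc (card (gap n S s))))" by (rule power_sum)
      finally have "(\<Prod>s\<in>S. real (fLF (card (gap n S s)))) * z^n = (\<Prod>s\<in>S. real (fLF (card (gap n S s)))) * (\<Prod>s\<in>S. z^(Suc (card (gap n S s))))" by simp
      also have "\<dots> = (\<Prod>s\<in>S. hh z (card (gap n S s)))" unfolding hh_def by (simp add: prod.distrib mult.commute)
      finally show "(\<Prod>s\<in>S. real (fLF (card (gap n S s)))) * z^n = (\<Prod>s\<in>S. hh z (card (gap n S s)))" .
    qed
    then show ?thesis by (simp add: sum_distrib_right mult.assoc)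
  qed
  also have "\<dots> = (\<Sum>k\<in>{1..n}. \<Sum>S\<in>{S\<in>?SS. card S = k}. real (pcount (card S)) * (\<Prod>s\<in>S. hh z (card (gap n S s))))"
  proof (rule sum.group[symmetric, OF finSS finite_atLeastAtMost])
    show "card ` ?SS \<subseteq> {1..n}"
    proof
      fix k assume "k \<in> card ` ?SS"
      then obtain S where S: "S \<in> ?SS" "k = card S" by blast
      then have "finite S" "S \<noteq> {}" by (auto intro: finite_subset)
      moreover have "card S \<le> card {..<n}" using S by (intro card_mono) auto
      ultimately show "k \<in> {1..n}" using S by (auto simp: Suc_le_eq card_gt_0_iff)
    qed
  qed
  also have "\<dots> = (\<Sum>k\<in>{1..n}. real (pcount k) * Qi z 0 n k)"
  proof (rule sum.cong[OF refl])
    fix k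
    have "{S\<in>?SS. card S = k} = {S. S \<subseteq> {0..<n} \<and> 0 \<in> S \<and> card S = k}" by auto
    then show "(\<Sum>S\<in>{S\<in>?SS. card S = k}. real (pcount (card S)) * (\<Prod>s\<in>S. hh z (card (gap n S s)))) = real (pcount k) * Qi z 0 n k"
      unfolding Qi_def by (simp add: sum_distrib_left)
  qed
  finally show ?thesis .
qed

lemma geo_identity:
  fixes r :: real assumes r: "r \<noteq> 1"
  shows "(\<Sum>j<M. (real j + 3) * r^j) + r^M * ((real M + 3)/(1-r) + r/(1-r)^2) = 3/(1-r) + r/(1-r)^2"
proof (induction M)
  case 0 then show ?case by simp
next
  case (Suc M)
  have r1: "1 - r \<noteq> 0" using r by simp
  have e: "\<And>m::real. m/(1-r) + r/(1-r)^2 = (m*(1-r) + r)/(1-r)^2"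
    using r1 by (simp add: power2_eq_square add_divide_distrib)
  have num: "r^M * ((real M + 3)*(1-r) + r) = (real M + 3) * r^M * (1-r)^2 + r^(Suc M) * ((real M + 4)*(1-r) + r)"
    by (simp add: power2_eq_square algebra_simps)
  have "r^M * ((real M + 3)/(1-r) + r/(1-r)^2) = r^M * ((real M + 3)*(1-r) + r) / (1-r)^2"
    by (simp add: e)
  also have "\<dots> = ((real M + 3) * r^M * (1-r)^2 + r^(Suc M) * ((real M + 4)*(1-r) + r)) / (1-r)^2"
    by (simp only: num)
  also have "\<dots> = (real M + 3) * r^M * (1-r)^2 / (1-r)^2 + r^(Suc M) * ((real M + 4)*(1-r) + r) / (1-r)^2"
    by (rule add_divide_distrib)
  also have "\<dots> = (real M + 3) * r^M + r^(Suc M) * (((real M + 4)*(1-r) + r) / (1-r)^2)"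
    using r1 by simp
  also have "((real M + 4)*(1-r) + r) / (1-r)^2 = (real (Suc M) + 3)/(1-r) + r/(1-r)^2"
    using e[of "real M + 4"] by (simp add: add_ac)
  finally have "r^M * ((real M + 3)/(1-r) + r/(1-r)^2) = (real M + 3) * r^M + r^(Suc M) * ((real (Suc M) + 3)/(1-r) + r/(1-r)^2)" .
  then show ?case using Suc by simp
qed

lemma geo_bound:
  fixes r :: real assumes "0 \<le> r" "r < 1"
  shows "(\<Sum>j<M. (real j + 3) * r^j) \<le> 3/(1-r) + r/(1-r)^2"
proof -
  have "0 \<le> r^M * ((real M + 3)/(1-r) + r/(1-r)^2)" using assms by (intro mult_nonneg_nonneg add_nonneg_nonneg) auto
  then show ?thesis using geo_identity[of r M] assms by linarith
qed

lemma pcount_split: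
  "(\<Sum>k\<in>{1..Suc (Suc M)}. real (pcount k) * x^k) = x + x^2 + (\<Sum>j<M. (real j + 3) * 2^j * x^(j+3))"
proof (induction M)
  case 0
  have "{1..Suc (Suc 0)} = {1, 2}" by auto
  then show ?case by (simp add: pcount_def)
next
  case (Suc M)
  have "{1..Suc (Suc (Suc M))} = insert (Suc (Suc (Suc M))) {1..Suc (Suc M)}" by auto
  then have "(\<Sum>k\<in>{1..Suc (Suc (Suc M))}. real (pcount k) * x^k) = real (pcount (M+3)) * x^(M+3) + (\<Sum>k\<in>{1..Suc (Suc M)}. real (pcount k) * x^k)"
    by (simp add: eval_nat_numeral)
  also have "real (pcount (M+3)) = (real M + 3) * 2^M" by (simp add: pcount_def)
  finally show ?case using Suc by simp
qed

lemma pcount_sum_bound: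
  fixes x :: real assumes x: "0 \<le> x" "x < 1/2"
  shows "(\<Sum>k\<in>{1..N}. real (pcount k) * x^k) \<le> x + x^2 + x^3 * (3 - 4*x) / (1 - 2*x)^2"
proof -
  have "(\<Sum>k\<in>{1..N}. real (pcount k) * x^k) \<le> (\<Sum>k\<in>{1..Suc (Suc N)}. real (pcount k) * x^k)"
    using x by (intro sum_mono2) auto
  also have "\<dots> = x + x^2 + (\<Sum>j<N. (real j + 3) * 2^j * x^(j+3))" by (rule pcount_split)
  also have "(\<Sum>j<N. (real j + 3) * 2^j * x^(j+3)) = x^3 * (\<Sum>j<N. (real j + 3) * (2*x)^j)"
    by (simp add: sum_distrib_left power_add power_mult_distrib mult_ac)
  also have "\<dots> \<le> x^3 * (3/(1-2*x) + (2*x)/(1-2*x)^2)"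
    using x by (intro mult_left_mono geo_bound) auto
  also have "3/(1-2*x) + (2*x)/(1-2*x)^2 = (3 - 4*x) / (1 - 2*x)^2"
  proof -
    have d: "1 - 2*x \<noteq> 0" using x by simp
    have "3/(1-2*x) = 3*(1-2*x)/(1-2*x)^2"
      using d by (metis nonzero_mult_divide_mult_cancel_right power2_eq_square)
    moreover have "(3*(1-2*x) + 2*x)/(1-2*x)^2 = 3*(1-2*x)/(1-2*x)^2 + 2*x/(1-2*x)^2" by (rule add_divide_distrib)
    ultimately have "3/(1-2*x) + (2*x)/(1-2*x)^2 = (3*(1-2*x) + 2*x)/(1-2*x)^2" by simp
    also have "3*(1-2*x) + 2*x = 3 - 4*x" by simp
    finally show ?thesis .
  qed
  finally show ?thesis by simp
qed

lemma T_bound: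
  fixes z Y :: real
  assumes z: "0 < z" and Y: "1 \<le> Y"
    and hyp: "\<And>N. 1 + (\<Sum>k\<in>{1..N}. real (pcount k) * (z*Y)^k) \<le> Y"
  shows "(\<Sum>n\<le>N. real (fLF n) * z^n) \<le> Y"
proof (induction N)
  case 0 then show ?case using Y by (simp add: fLF_0)
next
  case (Suc N)
  have z0: "0 \<le> z" using z by simp
  have nn: "\<And>n b. 0 \<le> real (pcount b) * Qi z 0 n b" using Qi_nonneg[OF z0] by simp
  have "(\<Sum>n\<le>Suc N. real (fLF n) * z^n) = 1 + (\<Sum>n\<le>N. real (fLF (Suc n)) * z^(Suc n))"
    by (subst sum.atMost_Suc_shift) (simp add: fLF_0)
  also have "(\<Sum>n\<le>N. real (fLF (Suc n)) * z^(Suc n)) \<le> (\<Sum>n\<le>N. \<Sum>k\<in>{1..Suc n}. real (pcount k) * Qi z 0 (Suc n) k)"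
  proof (rule sum_mono)
    fix n show "real (fLF (Suc n)) * z^(Suc n) \<le> (\<Sum>k\<in>{1..Suc n}. real (pcount k) * Qi z 0 (Suc n) k)"
      by (rule decomp_real) (use z in auto)
  qed
  also have "\<dots> \<le> (\<Sum>n\<le>N. \<Sum>k\<in>{1..Suc N}. real (pcount k) * Qi z 0 (Suc n) k)"
    using nn by (intro sum_mono sum_mono2) auto
  also have "\<dots> = (\<Sum>k\<in>{1..Suc N}. real (pcount k) * (\<Sum>n\<le>N. Qi z 0 (Suc n) k))"
    by (subst sum.swap) (simp add: sum_distrib_left)
  also have "\<dots> \<le> (\<Sum>k\<in>{1..Suc N}. real (pcount k) * (z*Y)^k)"
  proof (rule sum_mono)
    fix k assume k: "k \<in> {1..Suc N}"
    have "(\<Sum>n\<le>N. Qi z 0 (Suc n) k) = (\<Sum>m\<le>Suc N. Qi z 0 (0+m) k)"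
      by (subst sum.atMost_Suc_shift) (simp add: Qi_empty)
    also have "\<dots> \<le> (\<Sum>g<Suc N. hh z g)^k" using k z0 by (intro Q_sum_bound) auto
    also have "(\<Sum>g<Suc N. hh z g) = z * (\<Sum>n\<le>N. real (fLF n) * z^n)"
      unfolding hh_def by (simp add: sum_distrib_left lessThan_Suc_atMost mult_ac)
    also have "(z * (\<Sum>n\<le>N. real (fLF n) * z^n))^k \<le> (z*Y)^k"
      using Suc z0 by (intro power_mono mult_left_mono mult_nonneg_nonneg sum_nonneg) auto
    finally show "real (pcount k) * (\<Sum>n\<le>N. Qi z 0 (Suc n) k) \<le> real (pcount k) * (z*Y)^k"
      by (intro mult_left_mono) auto
  qed
  finally show ?case using hyp[of "Suc N"] by simp
qed

definition qq :: real where "qq = 5610718614 / 1000000000"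
definition YY :: real where "YY = 1593329 / 1000000"

lemma numeric: "1 + (YY/qq + (YY/qq)^2 + (YY/qq)^3 * (3 - 4*(YY/qq)) / (1 - 2*(YY/qq))^2) \<le> YY"
  unfolding YY_def qq_def by (simp add: power_divide divide_simps)

lemma fLF_bound: "real (fLF n) \<le> YY * qq^n"
proof -
  let ?z = "1 / qq"
  have qpos: "0 < qq" by (simp add: qq_def)
  have z: "0 < ?z" using qpos by simp
  have Y1: "1 \<le> YY" by (simp add: YY_def)
  have x: "0 \<le> YY/qq" "YY/qq < 1/2" by (simp_all add: qq_def YY_def)
  have hyp: "\<And>N. 1 + (\<Sum>k\<in>{1..N}. real (pcount k) * (?z*YY)^k) \<le> YY"
  proof -
    fix N
    have "1 + (\<Sum>k\<in>{1..N}. real (pcount k) * (YY/qq)^k) \<le> 1 + (YY/qq + (YY/qq)^2 + (YY/qq)^3 * (3 - 4*(YY/qq)) / (1 - 2*(YY/qq))^2)"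
      using pcount_sum_bound[OF x] by simp
    also have "\<dots> \<le> YY" by (rule numeric)
    finally have "1 + (\<Sum>k\<in>{1..N}. real (pcount k) * (YY/qq)^k) \<le> YY" .
    moreover have "?z*YY = YY/qq" by simp
    ultimately show "1 + (\<Sum>k\<in>{1..N}. real (pcount k) * (?z*YY)^k) \<le> YY" by (simp only:)
  qed
  have "real (fLF n) * ?z^n \<le> (\<Sum>m\<le>n. real (fLF m) * ?z^m)"
    using z by (intro member_le_sum) auto
  also have "\<dots> \<le> YY" by (rule T_bound[OF z Y1 hyp])
  finally have "real (fLF n) * ?z^n \<le> YY" .
  then show ?thesis using qpos by (simp add: field_simps power_divide)
qed

lemma cross_swap: "cross p r q = - cross p q r"
  unfolding cross_def by (simp add: algebra_simps)

lemma cross_cyc: "cross q r p = cross p q r"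
  unfolding cross_def by (simp add: algebra_simps)

lemma seg_inter:
  fixes p1 p2 p3 p4 :: "real \<times> real"
  assumes h1: "cross p1 p2 p3 * cross p1 p2 p4 < 0" and h2: "cross p3 p4 p1 * cross p3 p4 p2 < 0"
  shows "\<exists>x. x \<in> closed_segment p1 p2 \<and> x \<in> closed_segment p3 p4"
proof -
  obtain a1 b1 where p1: "p1 = (a1, b1)" by (cases p1)
  obtain a2 b2 where p2: "p2 = (a2, b2)" by (cases p2)
  obtain a3 b3 where p3: "p3 = (a3, b3)" by (cases p3)
  obtain a4 b4 where p4: "p4 = (a4, b4)" by (cases p4)
  define d1 where "d1 = cross p3 p4 p1"
  define d2 where "d2 = cross p3 p4 p2"
  define e3 where "e3 = cross p1 p2 p3"
  define e4 where "e4 = cross p1 p2 p4"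
  have dd: "(0 < d1 \<and> d2 < 0) \<or> (d1 < 0 \<and> 0 < d2)" using h2 unfolding d1_def d2_def by (simp add: mult_less_0_iff)
  have ee: "(0 < e3 \<and> e4 < 0) \<or> (e3 < 0 \<and> 0 < e4)" using h1 unfolding e3_def e4_def by (simp add: mult_less_0_iff)
  have dne: "d1 - d2 \<noteq> 0" using dd by auto
  have ene: "e3 - e4 \<noteq> 0" using ee by auto
  define t where "t = d1 / (d1 - d2)"
  define s where "s = e3 / (e3 - e4)"
  have t01: "0 \<le> t" "t \<le> 1" using dd unfolding t_def by (auto simp: divide_simps)
  have s01: "0 \<le> s" "s \<le> 1" using ee unfolding s_def by (auto simp: divide_simps)
  define X where "X = (1 - t) *\<^sub>R p1 + t *\<^sub>R p2"
  define Y where "Y = (1 - s) *\<^sub>R p3 + s *\<^sub>R p4"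
  have X: "X \<in> closed_segment p1 p2" unfolding X_def closed_segment_def using t01 by blast
  have Y: "Y \<in> closed_segment p3 p4" unfolding Y_def closed_segment_def using s01 by blast
  have id1: "(a2*d1 - a1*d2)*(e3-e4) = (a4*e3 - a3*e4)*(d1-d2)"
    unfolding d1_def d2_def e3_def e4_def p1 p2 p3 p4 cross_def by (simp add: algebra_simps)
  have id2: "(b2*d1 - b1*d2)*(e3-e4) = (b4*e3 - b3*e4)*(d1-d2)"
    unfolding d1_def d2_def e3_def e4_def p1 p2 p3 p4 cross_def by (simp add: algebra_simps)
  have t1: "1 - t = - d2 / (d1 - d2)" unfolding t_def using dne by (simp add: field_simps)
  have s1: "1 - s = - e4 / (e3 - e4)" unfolding s_def using ene by (simp add: field_simps)
  have comb: "\<And>xa ya ua va (dd::real). dd \<noteq> 0 \<Longrightarrow> (- va / dd) * xa + (ua / dd) * ya = (ya * ua - xa * va) / dd"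
    by (simp add: field_simps)
  have "fst X = (1-t)*a1 + t*a2" "snd X = (1-t)*b1 + t*b2" unfolding X_def p1 p2 by simp_all
  then have fX: "fst X = (a2*d1 - a1*d2)/(d1-d2)" "snd X = (b2*d1 - b1*d2)/(d1-d2)"
    unfolding t1 unfolding t_def using comb[OF dne] by simp_all
  have "fst Y = (1-s)*a3 + s*a4" "snd Y = (1-s)*b3 + s*b4" unfolding Y_def p3 p4 by simp_all
  then have fY: "fst Y = (a4*e3 - a3*e4)/(e3-e4)" "snd Y = (b4*e3 - b3*e4)/(e3-e4)"
    unfolding s1 unfolding s_def using comb[OF ene] by simp_all
  have "fst X = fst Y" unfolding fX fY using dne ene id1 by (simp add: divide_simps)
  moreover have "snd X = snd Y" unfolding fX fY using dne ene id2 by (simp add: divide_simps)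
  ultimately have "X = Y" by (simp add: prod_eq_iff)
  then show ?thesis using X Y by blast
qed

lemma enum_exists:
  fixes X :: "(real \<times> real) set"
  assumes fin: "finite X" and inj: "inj_on fst X"
  shows "\<exists>u. bij_betw u {..<card X} X \<and> (\<forall>i j. i < j \<longrightarrow> j < card X \<longrightarrow> fst (u i) < fst (u j))"
proof -
  define xs where "xs = sorted_list_of_set (fst ` X)"
  have finf: "finite (fst ` X)" using fin by simp
  have len: "length xs = card X" unfolding xs_def using card_image[OF inj] finf by simp
  have sw: "sorted_wrt (<) xs" unfolding xs_def using strict_sorted_list_of_set by blast
  have dxs: "distinct xs" unfolding xs_def by simp
  have sxs: "set xs = fst ` X" unfolding xs_def using finf by simp
  define u where "u i = inv_into X fst (xs ! i)" for i
  have uX: "\<And>i. i < card X \<Longrightarrow> u i \<in> X \<and> fst (u i) = xs ! i"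
  proof -
    fix i assume i: "i < card X"
    then have "xs ! i \<in> fst ` X" using sxs len nth_mem by metis
    then show "u i \<in> X \<and> fst (u i) = xs ! i" unfolding u_def by (simp add: inv_into_into f_inv_into_f)
  qed
  have mono: "\<forall>i j. i < j \<longrightarrow> j < card X \<longrightarrow> fst (u i) < fst (u j)"
  proof (intro allI impI)
    fix i j assume ij: "i < j" "j < card X"
    then have "xs ! i < xs ! j" using sorted_wrt_nth_less[OF sw] len by simp
    then show "fst (u i) < fst (u j)" using uX ij by simp
  qed
  have "bij_betw u {..<card X} X"
  proof (rule bij_betw_imageI)
    show "inj_on u {..<card X}"
    proof (rule inj_onI)
      fix i j assume "i \<in> {..<card X}" "j \<in> {..<card X}" "u i = u j"
      then have "xs ! i = xs ! j" "i < length xs" "j < length xs" using uX len by (metis lessThan_iff)+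
      then show "i = j" using dxs by (simp add: nth_eq_iff_index_eq)
    qed
    show "u ` {..<card X} = X"
    proof
      show "u ` {..<card X} \<subseteq> X" using uX by auto
      show "X \<subseteq> u ` {..<card X}"
      proof
        fix x assume x: "x \<in> X"
        then have "fst x \<in> set xs" using sxs by simp
        then obtain i where i: "i < length xs" "xs ! i = fst x" by (auto simp: in_set_conv_nth)
        then have "u i = inv_into X fst (fst x)" unfolding u_def by simp
        also have "\<dots> = x" using inj x by (simp add: inv_into_f_f)
        finally show "x \<in> u ` {..<card X}" using i len by force
      qed
    qed
  qed
  then show ?thesis using mono by blast
qed

definition chainp :: "(nat \<Rightarrow> real \<times> real) \<Rightarrow> nat \<Rightarrow> bool" where
  "chainp u n \<longleftrightarrow> (\<forall>a b c. a < b \<and> b < c \<and> c < n \<longrightarrow> cross (u a) (u c) (u b) < 0) \<or>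
                   (\<forall>a b c. a < b \<and> b < c \<and> c < n \<longrightarrow> cross (u a) (u c) (u b) > 0)"

lemma chainp_convex:
  assumes "convex_chain X" "bij_betw u {..<card X} X" "\<forall>i j. i < j \<longrightarrow> j < card X \<longrightarrow> fst (u i) < fst (u j)"
  shows "chainp u (card X)"
proof -
  have "\<forall>a b c. a < b \<and> b < c \<and> c < card X \<longrightarrow> cross (u a) (u c) (u b) < 0"
  proof (intro allI impI)
    fix a b c assume h: "a < b \<and> b < c \<and> c < card X"
    have mem: "u a \<in> X" "u b \<in> X" "u c \<in> X" using h assms(2) bij_betwE by fastforce+
    have "fst (u a) < fst (u b)" "fst (u b) < fst (u c)" using h assms(3) by auto
    then show "cross (u a) (u c) (u b) < 0"
      using assms(1) mem unfolding convex_chain_def strictly_below_def by force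
  qed
  then show ?thesis unfolding chainp_def by blast
qed

lemma chainp_concave:
  assumes "concave_chain X" "bij_betw u {..<card X} X" "\<forall>i j. i < j \<longrightarrow> j < card X \<longrightarrow> fst (u i) < fst (u j)"
  shows "chainp u (card X)"
proof -
  have "\<forall>a b c. a < b \<and> b < c \<and> c < card X \<longrightarrow> cross (u a) (u c) (u b) > 0"
  proof (intro allI impI)
    fix a b c assume h: "a < b \<and> b < c \<and> c < card X"
    have mem: "u a \<in> X" "u b \<in> X" "u c \<in> X" using h assms(2) bij_betwE by fastforce+
    have "fst (u a) < fst (u b)" "fst (u b) < fst (u c)" using h assms(3) by auto
    then show "cross (u a) (u c) (u b) > 0"
      using assms(1) mem unfolding concave_chain_def strictly_above_def by force
  qed
  then show ?thesis unfolding chainp_def by blast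
qed

lemma chord_cross:
  assumes ch: "chainp u n" and abcd: "a < c" "c < b" "b < d" "d < n"
  shows "\<exists>x. x \<in> closed_segment (u a) (u b) \<and> x \<in> closed_segment (u c) (u d)"
proof (rule seg_inter)
  have e1: "cross (u a) (u b) (u d) = - cross (u a) (u d) (u b)" by (rule cross_swap)
  have e2: "cross (u c) (u d) (u a) = - cross (u a) (u d) (u c)"
    using cross_cyc[of "u c" "u d" "u a"] cross_swap[of "u a" "u d" "u c"] by simp
  from ch consider (neg) "\<forall>a b c. a < b \<and> b < c \<and> c < n \<longrightarrow> cross (u a) (u c) (u b) < 0"
    | (pos) "\<forall>a b c. a < b \<and> b < c \<and> c < n \<longrightarrow> cross (u a) (u c) (u b) > 0" unfolding chainp_def by blast
  then have "cross (u a) (u b) (u c) * cross (u a) (u b) (u d) < 0 \<and> cross (u c) (u d) (u a) * cross (u c) (u d) (u b) < 0"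
  proof cases
    case neg
    have s1: "cross (u a) (u b) (u c) < 0" using neg abcd by auto
    have s2: "cross (u a) (u d) (u b) < 0" using neg abcd by auto
    have s3: "cross (u c) (u d) (u b) < 0" using neg abcd by auto
    have s4: "cross (u a) (u d) (u c) < 0" using neg abcd by auto
    show ?thesis using s1 s2 s3 s4 e1 e2 by (simp add: mult_neg_neg mult_pos_pos)
  next
    case pos
    have s1: "cross (u a) (u b) (u c) > 0" using pos abcd by auto
    have s2: "cross (u a) (u d) (u b) > 0" using pos abcd by auto
    have s3: "cross (u c) (u d) (u b) > 0" using pos abcd by auto
    have s4: "cross (u a) (u d) (u c) > 0" using pos abcd by auto
    show ?thesis using s1 s2 s3 s4 e1 e2 by (simp add: mult_neg_neg mult_pos_pos)
  qed
  then show "cross (u a) (u b) (u c) * cross (u a) (u b) (u d) < 0" "cross (u c) (u d) (u a) * cross (u c) (u d) (u b) < 0"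
    by auto
qed

lemma poly_nc:
  assumes "polygonization P E" "e \<in> E" "f \<in> E" "e \<inter> f = {}"
    "x \<in> closed_segment a b" "a \<in> e" "b \<in> e" "x \<in> closed_segment c d" "c \<in> f" "d \<in> f"
  shows False
proof -
  have "e \<noteq> f" using assms by auto
  then have "(\<Union>a\<in>e. \<Union>b\<in>e. closed_segment a b) \<inter> (\<Union>a\<in>f. \<Union>b\<in>f. closed_segment a b) \<subseteq> e \<inter> f"
    using assms(1-3) unfolding polygonization_def by blast
  moreover have "x \<in> (\<Union>a\<in>e. \<Union>b\<in>e. closed_segment a b)" using assms by blast
  moreover have "x \<in> (\<Union>a\<in>f. \<Union>b\<in>f. closed_segment a b)" using assms by blast
  ultimately show False using assms(4) by blast
qed

lemma cycle_edge_form: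
  assumes "e \<in> cycle_edges vs" "distinct vs" "2 \<le> length vs"
  shows "\<exists>x y. x \<noteq> y \<and> x \<in> set vs \<and> y \<in> set vs \<and> e = {x,y}"
proof -
  obtain i where i: "i < length vs" "e = {vs!i, vs!((i+1) mod length vs)}"
    using assms(1) unfolding cycle_edges_def by blast
  have k0: "0 < length vs" using i by arith
  have m: "(i+1) mod length vs < length vs" using k0 by simp
  have "(i+1) mod length vs \<noteq> i"
  proof (cases "i + 1 < length vs")
    case True then show ?thesis by simp
  next
    case False then have "i + 1 = length vs" using i by simp
    then show ?thesis using assms(3) by simp
  qed
  then have ne: "vs!i \<noteq> vs!((i+1) mod length vs)" using assms(2) i m by (simp add: nth_eq_iff_index_eq)
  have mem: "vs!i \<in> set vs" "vs!((i+1) mod length vs) \<in> set vs" using i m by (simp_all only: nth_mem)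
  show ?thesis using ne mem i(2) by blast
qed

lemma cycle_split:
  assumes "2 \<le> length ws"
  shows "cycle_edges ws = insert {ws!(length ws - 1), ws!0} (pedges ws)"
proof
  show "cycle_edges ws \<subseteq> insert {ws!(length ws - 1), ws!0} (pedges ws)"
  proof
    fix e assume "e \<in> cycle_edges ws"
    then obtain i where i: "i < length ws" "e = {ws!i, ws!((i+1) mod length ws)}"
      unfolding cycle_edges_def by blast
    show "e \<in> insert {ws!(length ws - 1), ws!0} (pedges ws)"
    proof (cases "i + 1 < length ws")
      case True
      then have "e = {ws!i, ws!Suc i}" using i by simp
      then show ?thesis using True unfolding pedges_def by auto
    next
      case False
      then have ii: "i = length ws - 1" using i by simp
      have "length ws - 1 + 1 = length ws" using assms by simp
      then have "(i + 1) mod length ws = 0" using ii by simp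
      then have "e = {ws!(length ws - 1), ws!0}" using i ii by simp
      then show ?thesis by simp
    qed
  qed
  show "insert {ws!(length ws - 1), ws!0} (pedges ws) \<subseteq> cycle_edges ws"
  proof
    fix e assume "e \<in> insert {ws!(length ws - 1), ws!0} (pedges ws)"
    then consider "e = {ws!(length ws - 1), ws!0}" | "e \<in> pedges ws" by blast
    then show "e \<in> cycle_edges ws"
    proof cases
      case 1
      have "length ws - 1 + 1 = length ws" using assms by simp
      then have "(length ws - 1 + 1) mod length ws = 0" by simp
      then have "e = {ws!(length ws - 1), ws!((length ws - 1 + 1) mod length ws)}" using 1 by simp
      moreover have "length ws - 1 < length ws" using assms by simp
      ultimately show ?thesis unfolding cycle_edges_def by blast
    next
      case 2
      then obtain i where i: "Suc i < length ws" "e = {ws!i, ws!Suc i}" unfolding pedges_def by blast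
      then have "e = {ws!i, ws!((i+1) mod length ws)}" by simp
      moreover have "i < length ws" using i by simp
      ultimately show ?thesis unfolding cycle_edges_def by blast
    qed
  qed
qed

lemma wrap_notin:
  assumes "distinct ws" "3 \<le> length ws"
  shows "{ws!(length ws - 1), ws!0} \<notin> pedges ws"
proof
  assume "{ws!(length ws - 1), ws!0} \<in> pedges ws"
  then obtain i where i: "Suc i < length ws" "{ws!(length ws - 1), ws!0} = {ws!i, ws!Suc i}"
    unfolding pedges_def by blast
  have idx: "length ws - 1 < length ws" "0 < length ws" "i < length ws" using i by auto
  from i(2) have "(ws!(length ws - 1) = ws!i \<and> ws!0 = ws!Suc i) \<or> (ws!(length ws - 1) = ws!Suc i \<and> ws!0 = ws!i)"
    unfolding doubleton_eq_iff .
  then show False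
  proof
    assume h: "ws!(length ws - 1) = ws!i \<and> ws!0 = ws!Suc i"
    then have "length ws - 1 = i" using assms(1) idx by (simp add: nth_eq_iff_index_eq)
    then show False using i by simp
  next
    assume h: "ws!(length ws - 1) = ws!Suc i \<and> ws!0 = ws!i"
    then have "length ws - 1 = Suc i" using assms(1) idx i by (simp add: nth_eq_iff_index_eq)
    moreover have "0 = i" using h assms(1) idx by (simp add: nth_eq_iff_index_eq)
    ultimately show False using assms(2) by simp
  qed
qed

lemma cycle_rotate_sub: "cycle_edges (rotate m vs) \<subseteq> cycle_edges vs"
proof
  fix e assume "e \<in> cycle_edges (rotate m vs)"
  then obtain i where i: "i < length vs" "e = {rotate m vs ! i, rotate m vs ! ((i+1) mod length vs)}"
    unfolding cycle_edges_def by auto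
  let ?k = "length vs"
  have k: "0 < ?k" using i(1) by arith
  have "rotate m vs ! i = vs ! ((i + m) mod ?k)" using i by (simp add: nth_rotate add.commute)
  moreover have "rotate m vs ! ((i+1) mod ?k) = vs ! (((i+1) mod ?k + m) mod ?k)" using k by (simp add: nth_rotate add.commute)
  moreover have "((i+1) mod ?k + m) mod ?k = ((i + m) mod ?k + 1) mod ?k" by (simp add: mod_simps)
  ultimately have "e = {vs ! ((i + m) mod ?k), vs ! (((i + m) mod ?k + 1) mod ?k)}" using i by simp
  moreover have "(i + m) mod ?k < ?k" using k by simp
  ultimately show "e \<in> cycle_edges vs" unfolding cycle_edges_def by blast
qed

lemma cycle_rotate: "cycle_edges (rotate m vs) = cycle_edges vs"
proof
  show "cycle_edges (rotate m vs) \<subseteq> cycle_edges vs" by (rule cycle_rotate_sub)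
  show "cycle_edges vs \<subseteq> cycle_edges (rotate m vs)"
  proof (cases "vs = []")
    case True then show ?thesis by simp
  next
    case False
    let ?k = "length vs"
    have "rotate (?k - m mod ?k) (rotate m vs) = rotate ((?k - m mod ?k) + m) vs" by (simp add: rotate_rotate)
    also have "\<dots> = vs"
    proof (rule rotate_id)
      have "(?k - m mod ?k + m) mod ?k = (?k - m mod ?k + m mod ?k) mod ?k" by (simp add: mod_simps)
      also have "?k - m mod ?k + m mod ?k = ?k" using False by (simp add: less_imp_le)
      finally show "(?k - m mod ?k + m) mod length vs = 0" by simp
    qed
    finally have "cycle_edges vs = cycle_edges (rotate (?k - m mod ?k) (rotate m vs))" by simp
    also have "\<dots> \<subseteq> cycle_edges (rotate m vs)" by (rule cycle_rotate_sub)
    finally show ?thesis .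
  qed
qed

lemma runs_exist:
  "distinct ws \<Longrightarrow> \<exists>Rs. distinct (concat Rs) \<and> set (concat Rs) = set ws \<inter> X \<and> [] \<notin> set Rs \<and>
     \<Union> (pedges ` set Rs) = {e \<in> pedges ws. e \<subseteq> X} \<and>
     (ws \<noteq> [] \<longrightarrow> hd ws \<in> X \<longrightarrow> (Rs \<noteq> [] \<and> hd Rs \<noteq> [] \<and> hd (hd Rs) = hd ws))"
proof (induction ws)
  case Nil then show ?case by (intro exI[of _ "[]"]) simp
next
  case (Cons x ws)
  then obtain Rs where Rs: "distinct (concat Rs)" "set (concat Rs) = set ws \<inter> X" "[] \<notin> set Rs"
     "\<Union> (pedges ` set Rs) = {e \<in> pedges ws. e \<subseteq> X}"
     "ws \<noteq> [] \<longrightarrow> hd ws \<in> X \<longrightarrow> (Rs \<noteq> [] \<and> hd Rs \<noteq> [] \<and> hd (hd Rs) = hd ws)" by auto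
  have xws: "x \<notin> set ws" using Cons.prems by simp
  have pe: "{e \<in> pedges (x # ws). e \<subseteq> X} = (if ws \<noteq> [] \<and> x \<in> X \<and> hd ws \<in> X then insert {x, hd ws} {e \<in> pedges ws. e \<subseteq> X} else {e \<in> pedges ws. e \<subseteq> X})"
  proof (cases "ws = []")
    case True then show ?thesis by simp
  next
    case False then show ?thesis by (auto simp: pedges_Cons)
  qed
  show ?case
  proof (cases "x \<in> X")
    case False
    have nh: "\<not> (ws \<noteq> [] \<and> x \<in> X \<and> hd ws \<in> X)" using False by blast
    have pe2: "{e \<in> pedges (x # ws). e \<subseteq> X} = {e \<in> pedges ws. e \<subseteq> X}" by (simp only: pe if_not_P[OF nh])
    have "set (x # ws) \<inter> X = set ws \<inter> X" using False by auto
    then show ?thesis using Rs(1-4) pe2 False by (intro exI[of _ Rs]) simp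
  next
    case xX: True
    show ?thesis
    proof (cases "ws \<noteq> [] \<and> hd ws \<in> X")
      case False
      let ?Rs = "[x] # Rs"
      have "distinct (concat ?Rs)" using Rs(1,2) xws by auto
      moreover have "set (concat ?Rs) = set (x # ws) \<inter> X" using Rs(2) xX by auto
      moreover have "[] \<notin> set ?Rs" using Rs(3) by simp
      moreover have "\<Union> (pedges ` set ?Rs) = {e \<in> pedges (x # ws). e \<subseteq> X}"
      proof -
        have nh: "\<not> (ws \<noteq> [] \<and> x \<in> X \<and> hd ws \<in> X)" using False by blast
        have "{e \<in> pedges (x # ws). e \<subseteq> X} = {e \<in> pedges ws. e \<subseteq> X}" by (simp only: pe if_not_P[OF nh])
        then show ?thesis using Rs(4) by simp
      qed
      ultimately show ?thesis by (intro exI[of _ ?Rs]) simp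
    next
      case True
      then obtain r0 Rs' where R0: "Rs = r0 # Rs'" "r0 \<noteq> []" "hd r0 = hd ws" using Rs(5) by (cases Rs) auto
      let ?Rs = "(x # r0) # Rs'"
      have "distinct (concat ?Rs)" using Rs(1,2) xws R0 by auto
      moreover have "set (concat ?Rs) = set (x # ws) \<inter> X" using Rs(2) xX R0 by auto
      moreover have "[] \<notin> set ?Rs" using Rs(3) R0 by simp
      moreover have "\<Union> (pedges ` set ?Rs) = {e \<in> pedges (x # ws). e \<subseteq> X}"
      proof -
        have "pedges (x # r0) = insert {x, hd ws} (pedges r0)" using R0 by (simp add: pedges_Cons)
        then have "\<Union> (pedges ` set ?Rs) = insert {x, hd ws} (\<Union> (pedges ` set Rs))" using R0 by auto
        then show ?thesis using Rs(4) pe True xX by simp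
      qed
      ultimately show ?thesis by (intro exI[of _ ?Rs]) simp
    qed
  qed
qed

lemma LF_from_list:
  assumes u: "bij_betw u {..<n} X"
    and ws: "distinct ws" "X \<subseteq> set ws"
    and nc: "\<And>a b c d. a < c \<Longrightarrow> c < b \<Longrightarrow> b < d \<Longrightarrow> d < n \<Longrightarrow> {u a, u b} \<in> G \<Longrightarrow> {u c, u d} \<in> G \<Longrightarrow> False"
    and G: "G = {e \<in> pedges ws. e \<subseteq> X}"
  shows "(\<lambda>e. inv_into {..<n} u ` e) ` G \<in> LF {..<n}"
proof -
  let ?i = "inv_into {..<n} u"
  obtain Rs where Rs0: "distinct (concat Rs) \<and> set (concat Rs) = set ws \<inter> X \<and> [] \<notin> set Rs \<and>
     \<Union> (pedges ` set Rs) = {e \<in> pedges ws. e \<subseteq> X} \<and>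
     (ws \<noteq> [] \<longrightarrow> hd ws \<in> X \<longrightarrow> (Rs \<noteq> [] \<and> hd Rs \<noteq> [] \<and> hd (hd Rs) = hd ws))"
    using runs_exist[OF ws(1), of X] by (rule exE)
  have Rs: "distinct (concat Rs)" "set (concat Rs) = set ws \<inter> X" "[] \<notin> set Rs"
     "\<Union> (pedges ` set Rs) = {e \<in> pedges ws. e \<subseteq> X}" using Rs0 by simp_all
  have sX: "set (concat Rs) = X" using Rs(2) ws(2) by auto
  have bi: "bij_betw ?i X {..<n}" using u by (rule bij_betw_inv_into)
  have injX: "inj_on ?i X" using bi by (rule bij_betw_imp_inj_on)
  have iX: "?i ` X = {..<n}" using bi by (rule bij_betw_imp_surj_on)
  have iu: "\<And>a. a < n \<Longrightarrow> ?i (u a) = a" using u by (simp add: bij_betw_def inv_into_f_f)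
  have ui: "\<And>x. x \<in> X \<Longrightarrow> u (?i x) = x" using u by (simp add: bij_betw_def f_inv_into_f)
  let ?Rs = "map (map ?i) Rs"
  have d1: "distinct (concat ?Rs)" using Rs(1) injX sX by (simp add: map_concat[symmetric] distinct_map)
  have s1: "set (concat ?Rs) = {..<n}" using sX iX by (simp add: map_concat[symmetric])
  have n1: "[] \<notin> set ?Rs" using Rs(3) by auto
  have e1: "(\<lambda>e. ?i ` e) ` G = \<Union> (pedges ` set ?Rs)"
  proof -
    have "\<Union> (pedges ` set ?Rs) = \<Union> ((\<lambda>r. (\<lambda>e. ?i ` e) ` pedges r) ` set Rs)"
      by (simp add: pedges_map image_image)
    also have "\<dots> = (\<lambda>e. ?i ` e) ` \<Union> (pedges ` set Rs)" by (simp add: image_UN)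
    finally show ?thesis using Rs(4) G by simp
  qed
  have nc1: "ncross ((\<lambda>e. ?i ` e) ` G)"
    unfolding ncross_def
  proof (intro allI impI)
    fix a b c d assume h: "{a,b} \<in> (\<lambda>e. ?i ` e) ` G" "{c,d} \<in> (\<lambda>e. ?i ` e) ` G" "a < c" "c < b" "b < d"
    obtain e where e: "e \<in> G" "{a,b} = ?i ` e" using h(1) by blast
    obtain f where f: "f \<in> G" "{c,d} = ?i ` f" using h(2) by blast
    have eX: "e \<subseteq> X" "f \<subseteq> X" using e f G by auto
    have uie: "\<And>g. g \<subseteq> X \<Longrightarrow> u ` ?i ` g = g"
    proof -
      fix g assume gX: "g \<subseteq> X"
      have "u ` ?i ` g = (\<lambda>x. u (?i x)) ` g" by (simp add: image_image)
      also have "\<dots> = (\<lambda>x. x) ` g" using gX ui by (intro image_cong) auto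
      finally show "u ` ?i ` g = g" by simp
    qed
    have "e = u ` {a,b}" using e(2) uie[OF eX(1)] by simp
    then have e2: "e = {u a, u b}" by simp
    have "f = u ` {c,d}" using f(2) uie[OF eX(2)] by simp
    then have f2: "f = {u c, u d}" by simp
    have "d \<in> ?i ` X" using f(2) eX by blast
    then have "d < n" using iX by auto
    then show False using nc[OF h(3) h(4) h(5)] e(1) f(1) e2 f2 by simp
  qed
  show ?thesis unfolding LF_def using d1 s1 n1 e1 nc1 by (intro CollectI exI[of _ ?Rs]) simp
qed

lemma cycle_deg:
  assumes d: "distinct vs" and k3: "3 \<le> length vs" and v: "v \<in> set vs"
  shows "card {e \<in> cycle_edges vs. v \<in> e} = 2"
proof -
  let ?k = "length vs"
  obtain i where i: "i < ?k" "vs ! i = v" using v by (auto simp: in_set_conv_nth)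
  define p where "p = (if i = 0 then ?k - 1 else i - 1)"
  define q where "q = (if i = ?k - 1 then 0 else i + 1)"
  have pk: "p < ?k" "q < ?k" using i k3 unfolding p_def q_def by auto
  have p1: "(p + 1) mod ?k = i" using i k3 unfolding p_def by auto
  have q1: "(i + 1) mod ?k = q"
  proof (cases "i = ?k - 1")
    case True then have "i + 1 = ?k" using k3 by simp
    then show ?thesis using True unfolding q_def by simp
  next
    case False then have "i + 1 < ?k" using i by simp
    then show ?thesis using False unfolding q_def by simp
  qed
  have pq: "p \<noteq> q" "p \<noteq> i" "q \<noteq> i" using i k3 unfolding p_def q_def by auto
  define E1 where "E1 = {vs!p, vs!i}"
  define E2 where "E2 = {vs!i, vs!q}"
  have ne: "vs!p \<noteq> vs!q" "vs!p \<noteq> vs!i" "vs!q \<noteq> vs!i" using pq pk i(1) d by (simp_all add: nth_eq_iff_index_eq)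
  have E12: "E1 \<noteq> E2" unfolding E1_def E2_def using ne by (auto simp: doubleton_eq_iff)
  have eq: "{e \<in> cycle_edges vs. v \<in> e} = {E1, E2}"
  proof
    show "{e \<in> cycle_edges vs. v \<in> e} \<subseteq> {E1, E2}"
    proof
      fix e assume e: "e \<in> {e \<in> cycle_edges vs. v \<in> e}"
      then obtain j where j: "j < ?k" "e = {vs!j, vs!((j+1) mod ?k)}" "v \<in> e"
        unfolding cycle_edges_def by blast
      have "0 < ?k" using j(1) by arith
      then have jm: "(j+1) mod ?k < ?k" by simp
      from j(2,3) consider "vs!j = vs!i" | "vs!((j+1) mod ?k) = vs!i" using i by auto
      then show "e \<in> {E1, E2}"
      proof cases
        case 1 from nth_eq_iff_index_eq[OF d j(1) i(1)] 1 have "j = i" by simp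
        then show ?thesis using j q1 unfolding E2_def by simp
      next
        case 2 from nth_eq_iff_index_eq[OF d jm i(1)] 2 have ji: "(j+1) mod ?k = i" by simp
        have "j = p"
        proof (cases "j + 1 < ?k")
          case True then have "j + 1 = i" using ji by simp
          then show ?thesis unfolding p_def by simp
        next
          case False then have "j + 1 = ?k" using j by simp
          then have "i = 0" using ji by simp
          then show ?thesis unfolding p_def using \<open>j + 1 = ?k\<close> by simp
        qed
        then show ?thesis using j ji unfolding E1_def by (simp add: insert_commute)
      qed
    qed
    show "{E1, E2} \<subseteq> {e \<in> cycle_edges vs. v \<in> e}"
    proof -
      have "E1 \<in> cycle_edges vs" unfolding E1_def cycle_edges_def using pk p1 by force
      moreover have "E2 \<in> cycle_edges vs" unfolding E2_def cycle_edges_def using i q1 by force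
      ultimately show ?thesis using i unfolding E1_def E2_def by auto
    qed
  qed
  show ?thesis unfolding eq using E12 by simp
qed

lemma deg_remove:
  assumes "finite B" "e0 \<in> B"
  shows "card {e \<in> B - {e0}. v \<in> e} = card {e \<in> B. v \<in> e} - (if v \<in> e0 then 1 else 0)"
proof (cases "v \<in> e0")
  case True
  then have "{e \<in> B - {e0}. v \<in> e} = {e \<in> B. v \<in> e} - {e0}" by auto
  then show ?thesis using True assms by (simp add: card_Diff_singleton)
next
  case False
  then have "{e \<in> B - {e0}. v \<in> e} = {e \<in> B. v \<in> e}" by auto
  then show ?thesis using False by simp
qed

lemma bridge_unique:
  fixes U L :: "(real \<times> real) set"
  assumes UL: "U \<inter> L = {}" "inj_on fst U" "inj_on fst L"
  shows "finite B1 \<Longrightarrow> finite B2 \<Longrightarrow> card B1 = N \<Longrightarrow>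
     (\<forall>e\<in>B1 \<union> B2. \<exists>x\<in>U. \<exists>y\<in>L. e = {x,y}) \<Longrightarrow>
     (\<forall>x x' y y'. x\<in>U \<longrightarrow> x'\<in>U \<longrightarrow> y\<in>L \<longrightarrow> y'\<in>L \<longrightarrow> {x,y}\<in>B1 \<longrightarrow> {x',y'}\<in>B1 \<longrightarrow> fst x < fst x' \<longrightarrow> fst y' < fst y \<longrightarrow> False) \<Longrightarrow>
     (\<forall>x x' y y'. x\<in>U \<longrightarrow> x'\<in>U \<longrightarrow> y\<in>L \<longrightarrow> y'\<in>L \<longrightarrow> {x,y}\<in>B2 \<longrightarrow> {x',y'}\<in>B2 \<longrightarrow> fst x < fst x' \<longrightarrow> fst y' < fst y \<longrightarrow> False) \<Longrightarrow>
     (\<forall>v. card {e\<in>B1. v\<in>e} = card {e\<in>B2. v\<in>e}) \<Longrightarrow> B1 = B2"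
proof (induction N arbitrary: B1 B2)
  case 0
  then have B1: "B1 = {}" by simp
  show ?case
  proof (rule ccontr)
    assume "B1 \<noteq> B2"
    then obtain e where e: "e \<in> B2" using B1 by auto
    then obtain x y where "e = {x,y}" using "0.prems"(4) by blast
    then have "e \<in> {e\<in>B2. x\<in>e}" using e by simp
    then have "card {e\<in>B2. x\<in>e} \<noteq> 0" using "0.prems"(2) by auto
    moreover have "card {e\<in>B1. x\<in>e} = 0" using B1 by simp
    ultimately show False using "0.prems"(7) by metis
  qed
next
  case (Suc N)
  note fin1 = Suc.prems(1) and fin2 = Suc.prems(2) and form = Suc.prems(4)
    and nc1 = Suc.prems(5) and nc2 = Suc.prems(6) and deg = Suc.prems(7)
  have ne1: "B1 \<noteq> {}" using Suc.prems(3) by auto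
  have touch: "\<And>v. (\<exists>e\<in>B1. v \<in> e) \<longleftrightarrow> (\<exists>e\<in>B2. v \<in> e)"
  proof -
    fix v
    have "(\<exists>e\<in>B1. v \<in> e) \<longleftrightarrow> card {e\<in>B1. v\<in>e} \<noteq> 0" using fin1 by auto
    moreover have "(\<exists>e\<in>B2. v \<in> e) \<longleftrightarrow> card {e\<in>B2. v\<in>e} \<noteq> 0" using fin2 by auto
    ultimately show "(\<exists>e\<in>B1. v \<in> e) \<longleftrightarrow> (\<exists>e\<in>B2. v \<in> e)" using deg by metis
  qed
  define XU where "XU = {x\<in>U. \<exists>e\<in>B1. x \<in> e}"
  define YL where "YL = {y\<in>L. \<exists>e\<in>B1. y \<in> e}"
  obtain e00 where e00: "e00 \<in> B1" using ne1 by blast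
  then obtain x00 y00 where xy00: "x00 \<in> U" "y00 \<in> L" "e00 = {x00, y00}" using form by blast
  have finU1: "finite (\<Union> B1)"
  proof (rule finite_Union[OF fin1])
    fix e assume "e \<in> B1"
    then obtain x y where "e = {x,y}" using form by blast
    then show "finite e" by simp
  qed
  have finXU: "finite XU" "XU \<noteq> {}"
  proof -
    have "XU \<subseteq> \<Union> B1" unfolding XU_def by auto
    moreover note finU1
    ultimately show "finite XU" by (rule finite_subset)
    have "x00 \<in> XU" unfolding XU_def using xy00 e00 by blast
    then show "XU \<noteq> {}" by blast
  qed
  have finYL: "finite YL" "YL \<noteq> {}"
  proof -
    have "YL \<subseteq> \<Union> B1" unfolding YL_def by auto
    moreover note finU1
    ultimately show "finite YL" by (rule finite_subset)
    have "y00 \<in> YL" unfolding YL_def using xy00 e00 by blast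
    then show "YL \<noteq> {}" by blast
  qed
  obtain x0 where x0: "x0 \<in> XU" "\<And>x. x \<in> XU \<Longrightarrow> fst x0 \<le> fst x"
  proof -
    have "Min (fst ` XU) \<in> fst ` XU" using finXU by (intro Min_in) auto
    then obtain x0 where "x0 \<in> XU" "fst x0 = Min (fst ` XU)" by auto
    moreover have "\<And>x. x \<in> XU \<Longrightarrow> Min (fst ` XU) \<le> fst x" using finXU by (intro Min_le) auto
    ultimately show ?thesis using that by auto
  qed
  obtain y0 where y0: "y0 \<in> YL" "\<And>y. y \<in> YL \<Longrightarrow> fst y0 \<le> fst y"
  proof -
    have "Min (fst ` YL) \<in> fst ` YL" using finYL by (intro Min_in) auto
    then obtain y0 where "y0 \<in> YL" "fst y0 = Min (fst ` YL)" by auto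
    moreover have "\<And>y. y \<in> YL \<Longrightarrow> Min (fst ` YL) \<le> fst y" using finYL by (intro Min_le) auto
    ultimately show ?thesis using that by auto
  qed
  have key: "\<And>B. (\<forall>e\<in>B. \<exists>x\<in>U. \<exists>y\<in>L. e = {x,y}) \<Longrightarrow>
     (\<forall>x x' y y'. x\<in>U \<longrightarrow> x'\<in>U \<longrightarrow> y\<in>L \<longrightarrow> y'\<in>L \<longrightarrow> {x,y}\<in>B \<longrightarrow> {x',y'}\<in>B \<longrightarrow> fst x < fst x' \<longrightarrow> fst y' < fst y \<longrightarrow> False) \<Longrightarrow>
     (\<forall>v. (\<exists>e\<in>B1. v \<in> e) \<longleftrightarrow> (\<exists>e\<in>B. v \<in> e)) \<Longrightarrow> {x0, y0} \<in> B"
  proof -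
    fix B assume fB: "\<forall>e\<in>B. \<exists>x\<in>U. \<exists>y\<in>L. e = {x,y}"
      and ncB: "\<forall>x x' y y'. x\<in>U \<longrightarrow> x'\<in>U \<longrightarrow> y\<in>L \<longrightarrow> y'\<in>L \<longrightarrow> {x,y}\<in>B \<longrightarrow> {x',y'}\<in>B \<longrightarrow> fst x < fst x' \<longrightarrow> fst y' < fst y \<longrightarrow> False"
      and tB: "\<forall>v. (\<exists>e\<in>B1. v \<in> e) \<longleftrightarrow> (\<exists>e\<in>B. v \<in> e)"
    have x0U: "x0 \<in> U" "\<exists>e\<in>B. x0 \<in> e" using x0 tB unfolding XU_def by auto
    have y0L: "y0 \<in> L" "\<exists>e\<in>B. y0 \<in> e" using y0 tB unfolding YL_def by auto
    obtain e1 where e1: "e1 \<in> B" "x0 \<in> e1" using x0U by blast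
    then obtain x1 y1 where xy1: "x1 \<in> U" "y1 \<in> L" "e1 = {x1, y1}" using fB by blast
    have "x0 = x1" using e1 xy1 x0U UL(1) by auto
    then have e1': "{x0, y1} \<in> B" using e1 xy1 by simp
    obtain e2 where e2: "e2 \<in> B" "y0 \<in> e2" using y0L by blast
    then obtain x2 y2 where xy2: "x2 \<in> U" "y2 \<in> L" "e2 = {x2, y2}" using fB by blast
    have "y0 = y2" using e2 xy2 y0L UL(1) by auto
    then have e2': "{x2, y0} \<in> B" using e2 xy2 by simp
    have "\<exists>e\<in>B. y1 \<in> e" using e1' by blast
    then have "\<exists>e\<in>B1. y1 \<in> e" using tB by blast
    then have "y1 \<in> YL" unfolding YL_def using xy1(2) by blast
    then have fy: "fst y0 \<le> fst y1" using y0 by blast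
    have "\<exists>e\<in>B. x2 \<in> e" using e2' by blast
    then have "\<exists>e\<in>B1. x2 \<in> e" using tB by blast
    then have "x2 \<in> XU" unfolding XU_def using xy2(1) by blast
    then have fx: "fst x0 \<le> fst x2" using x0 by blast
    show "{x0, y0} \<in> B"
    proof (rule ccontr)
      assume nin: "{x0, y0} \<notin> B"
      then have "y1 \<noteq> y0" using e1' by auto
      then have "fst y0 < fst y1" using fy UL(3) y0L(1) xy1(2) inj_on_eq_iff by fastforce
      have "x2 \<noteq> x0" using nin e2' by auto
      then have "fst x0 < fst x2" using fx UL(2) x0U(1) xy2(1) inj_on_eq_iff by fastforce
      then show False using ncB x0U(1) xy2(1) xy1(2) y0L(1) e1' e2' \<open>fst y0 < fst y1\<close> by blast
    qed
  qed
  have in1: "{x0, y0} \<in> B1" using key[of B1] form nc1 by blast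
  have in2: "{x0, y0} \<in> B2" using key[of B2] form nc2 touch by blast
  let ?e = "{x0, y0}"
  have "B1 - {?e} = B2 - {?e}"
  proof (rule Suc.IH)
    show "finite (B1 - {?e})" "finite (B2 - {?e})" using fin1 fin2 by auto
    show "card (B1 - {?e}) = N" using Suc.prems(3) in1 fin1 by simp
    show "\<forall>e\<in>(B1 - {?e}) \<union> (B2 - {?e}). \<exists>x\<in>U. \<exists>y\<in>L. e = {x,y}" using form by blast
    show "\<forall>x x' y y'. x\<in>U \<longrightarrow> x'\<in>U \<longrightarrow> y\<in>L \<longrightarrow> y'\<in>L \<longrightarrow> {x,y}\<in>B1 - {?e} \<longrightarrow> {x',y'}\<in>B1 - {?e} \<longrightarrow> fst x < fst x' \<longrightarrow> fst y' < fst y \<longrightarrow> False"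
      using nc1 by blast
    show "\<forall>x x' y y'. x\<in>U \<longrightarrow> x'\<in>U \<longrightarrow> y\<in>L \<longrightarrow> y'\<in>L \<longrightarrow> {x,y}\<in>B2 - {?e} \<longrightarrow> {x',y'}\<in>B2 - {?e} \<longrightarrow> fst x < fst x' \<longrightarrow> fst y' < fst y \<longrightarrow> False"
      using nc2 by blast
    show "\<forall>v. card {e\<in>B1 - {?e}. v\<in>e} = card {e\<in>B2 - {?e}. v\<in>e}"
      using deg deg_remove[OF fin1 in1] deg_remove[OF fin2 in2] by simp
  qed
  then show ?case using in1 in2 by blast
qed

lemma poly_vs:
  assumes "polygonization P E"
  obtains vs where "distinct vs" "set vs = P" "3 \<le> length vs" "E = cycle_edges vs"
  using assms unfolding polygonization_def by blast

lemma nc_index: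
  assumes poly: "polygonization P E" and u: "bij_betw u {..<n} X" and ch: "chainp u n" and GE: "G \<subseteq> E"
  shows "\<And>a b c d. a < c \<Longrightarrow> c < b \<Longrightarrow> b < d \<Longrightarrow> d < n \<Longrightarrow> {u a, u b} \<in> G \<Longrightarrow> {u c, u d} \<in> G \<Longrightarrow> False"
proof -
  fix a b c d assume h: "a < c" "c < b" "b < d" "d < n" "{u a, u b} \<in> G" "{u c, u d} \<in> G"
  obtain x where x: "x \<in> closed_segment (u a) (u b)" "x \<in> closed_segment (u c) (u d)"
    using chord_cross[OF ch h(1-4)] by blast
  have inj: "inj_on u {..<n}" using u by (simp add: bij_betw_def)
  have lt: "a < n" "b < n" "c < n" "d < n" using h by auto
  have une: "\<And>i j. i < n \<Longrightarrow> j < n \<Longrightarrow> i \<noteq> j \<Longrightarrow> u i \<noteq> u j"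
    using inj by (auto simp: inj_on_def)
  have "u a \<noteq> u c" "u a \<noteq> u d" "u b \<noteq> u c" "u b \<noteq> u d"
    using une[of a c] une[of a d] une[of b c] une[of b d] h lt by auto
  then have disj: "{u a, u b} \<inter> {u c, u d} = {}" by auto
  show False using poly_nc[OF poly _ _ disj x(1) _ _ x(2)] h(5,6) GE by blast
qed

lemma part_LF:
  assumes poly: "polygonization P E" and X: "X \<subseteq> P" and u: "bij_betw u {..<n} X"
    and ch: "chainp u n" and out: "v \<in> P" "v \<notin> X"
  shows "(\<lambda>e. inv_into {..<n} u ` e) ` {e\<in>E. e \<subseteq> X} \<in> LF {..<n}"
proof -
  obtain vs where vs: "distinct vs" "set vs = P" "3 \<le> length vs" "E = cycle_edges vs"
    using poly by (rule poly_vs)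
  obtain j where j: "j < length vs" "vs ! j = v" using out vs(2) by (metis in_set_conv_nth)
  define ws where "ws = rotate j vs"
  have ws: "distinct ws" "set ws = P" "length ws = length vs" "cycle_edges ws = E"
    unfolding ws_def using vs by (simp_all add: cycle_rotate)
  have vne: "vs \<noteq> []" using vs(3) by (cases vs) auto
  have w0: "ws ! 0 = v" unfolding ws_def using nth_rotate[of 0 vs j] j vne by simp
  have "E = insert {ws!(length ws - 1), ws!0} (pedges ws)" using ws vs(3) cycle_split[of ws] by simp
  then have G: "{e\<in>E. e \<subseteq> X} = {e \<in> pedges ws. e \<subseteq> X}" using w0 out by auto
  show ?thesis
  proof (rule LF_from_list[OF u ws(1) _ _ G])
    show "X \<subseteq> set ws" using X ws by simp
    show "\<And>a b c d. a < c \<Longrightarrow> c < b \<Longrightarrow> b < d \<Longrightarrow> d < n \<Longrightarrow> {u a, u b} \<in> {e\<in>E. e \<subseteq> X} \<Longrightarrow> {u c, u d} \<in> {e\<in>E. e \<subseteq> X} \<Longrightarrow> False"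
      by (rule nc_index[OF poly u ch]) auto
  qed
qed

lemma full_LF:
  assumes poly: "polygonization X E" and u: "bij_betw u {..<n} X"
    and ch: "chainp u n" and e0: "e0 \<in> E"
  shows "(\<lambda>e. inv_into {..<n} u ` e) ` (E - {e0}) \<in> LF {..<n}"
proof -
  obtain vs where vs: "distinct vs" "set vs = X" "3 \<le> length vs" "E = cycle_edges vs"
    using poly by (rule poly_vs)
  let ?k = "length vs"
  obtain j where j: "j < ?k" "e0 = {vs!j, vs!((j+1) mod ?k)}" using e0 vs(4) unfolding cycle_edges_def by blast
  define ws where "ws = rotate (Suc j) vs"
  have ws: "distinct ws" "set ws = X" "length ws = ?k" "cycle_edges ws = E"
    unfolding ws_def using vs cycle_rotate[of "Suc j" vs] by (simp_all del: rotate_Suc)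
  have k0: "0 < ?k" using vs(3) by arith
  have w0: "ws ! 0 = vs!((j+1) mod ?k)" unfolding ws_def using nth_rotate[of 0 vs "Suc j"] k0 by (simp del: rotate_Suc)
  have "(?k - 1 + Suc j) mod ?k = j"
  proof -
    have "?k - 1 + Suc j = j + ?k" using k0 by simp
    then show ?thesis using j by simp
  qed
  then have wl: "ws ! (?k - 1) = vs ! j" unfolding ws_def using nth_rotate[of "?k - 1" vs "Suc j"] k0 by (simp del: rotate_Suc)
  have e0w: "e0 = {ws!(length ws - 1), ws!0}" using j w0 wl ws(3) by simp
  have E: "E = insert e0 (pedges ws)" using ws vs(3) cycle_split[of ws] e0w by simp
  have "e0 \<notin> pedges ws" using wrap_notin[of ws] ws vs(3) e0w by simp
  then have "E - {e0} = pedges ws" using E by auto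
  also have "\<dots> = {e \<in> pedges ws. e \<subseteq> X}" using pedges_subset ws(2) by blast
  finally have G: "E - {e0} = {e \<in> pedges ws. e \<subseteq> X}" .
  show ?thesis
  proof (rule LF_from_list[OF u ws(1) _ _ G])
    show "X \<subseteq> set ws" using ws by simp
    show "\<And>a b c d. a < c \<Longrightarrow> c < b \<Longrightarrow> b < d \<Longrightarrow> d < n \<Longrightarrow> {u a, u b} \<in> E - {e0} \<Longrightarrow> {u c, u d} \<in> E - {e0} \<Longrightarrow> False"
      by (rule nc_index[OF poly u ch]) auto
  qed
qed

lemma poly_deg:
  assumes "polygonization P E" "v \<in> P"
  shows "card {e\<in>E. v \<in> e} = 2"
proof -
  obtain vs where vs: "distinct vs" "set vs = P" "3 \<le> length vs" "E = cycle_edges vs"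
    using assms(1) by (rule poly_vs)
  then show ?thesis using cycle_deg assms(2) by simp
qed

lemma poly_edge:
  assumes "polygonization P E" "e \<in> E"
  shows "\<exists>x y. x \<noteq> y \<and> x \<in> P \<and> y \<in> P \<and> e = {x,y}"
proof -
  obtain vs where vs: "distinct vs" "set vs = P" "3 \<le> length vs" "E = cycle_edges vs"
    using assms(1) by (rule poly_vs)
  then show ?thesis using cycle_edge_form[of e vs] assms(2) by auto
qed

lemma poly_finite:
  assumes "polygonization P E" shows "finite E"
proof -
  obtain vs where vs: "distinct vs" "set vs = P" "3 \<le> length vs" "E = cycle_edges vs"
    using assms(1) by (rule poly_vs)
  have "cycle_edges vs = (\<lambda>i. {vs ! i, vs ! ((i + 1) mod length vs)}) ` {..<length vs}"
    unfolding cycle_edges_def by auto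
  then show ?thesis using vs(4) by simp
qed

lemma bridge_cross:
  assumes dc: "double_chain U L" and x: "x \<in> U" "x' \<in> U" and y: "y \<in> L" "y' \<in> L"
    and f: "fst x < fst x'" "fst y' < fst y"
  shows "\<exists>p. p \<in> closed_segment x y \<and> p \<in> closed_segment x' y'"
proof (rule seg_inter)
  have ne: "x \<noteq> x'" "y' \<noteq> y" using f by auto
  have hU: "\<forall>p\<in>U. \<forall>q\<in>U. p \<noteq> q \<longrightarrow> (\<forall>l\<in>L. strictly_below p q l)"
    using dc unfolding double_chain_def by (elim conjE) assumption
  have hL: "\<forall>p\<in>L. \<forall>q\<in>L. p \<noteq> q \<longrightarrow> (\<forall>u\<in>U. strictly_above p q u)"
    using dc unfolding double_chain_def by (elim conjE) assumption
  have b: "strictly_below x x' y" "strictly_below x x' y'" "strictly_above y' y x" "strictly_above y' y x'"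
    using hU[rule_format, OF x(1) x(2) ne(1)] hL[rule_format, OF y(2) y(1) ne(2)] y x by auto
  then have c1: "cross x x' y < 0" "cross x x' y' < 0" "cross y' y x > 0" "cross y' y x' > 0"
    using f unfolding strictly_below_def strictly_above_def by auto
  have "cross x y x' = - cross x x' y" by (rule cross_swap)
  moreover have "cross x y y' = - cross y' y x" using cross_swap[of x y y'] cross_cyc[of y' y x] by simp
  ultimately show "cross x y x' * cross x y y' < 0" using c1 by (simp add: mult_neg_pos)
  have "cross x' y' x = cross x x' y'" by (rule cross_cyc)
  moreover have "cross x' y' y = cross y' y x'" using cross_cyc[of y' y x'] by simp
  ultimately show "cross x' y' x * cross x' y' y < 0" using c1 by (simp add: mult_neg_pos mult_pos_neg)
qed

lemma dc_facts:
  assumes "double_chain U L"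
  shows "U \<inter> L = {}" "finite U" "finite L" "inj_on fst U" "inj_on fst L"
    "(convex_chain U \<or> concave_chain U)" "(convex_chain L \<or> concave_chain L)"
  using assms unfolding double_chain_def convex_chain_def concave_chain_def by blast+

lemma chain_enum:
  assumes "finite X" "inj_on fst X" "convex_chain X \<or> concave_chain X"
  obtains u where "bij_betw u {..<card X} X" "chainp u (card X)"
proof -
  obtain u where u: "bij_betw u {..<card X} X" "\<forall>i j. i < j \<longrightarrow> j < card X \<longrightarrow> fst (u i) < fst (u j)"
    using enum_exists[OF assms(1,2)] by blast
  have "chainp u (card X)" using assms(3) chainp_convex[OF _ u] chainp_concave[OF _ u] by blast
  then show ?thesis using u(1) that by blast
qed

lemma deg_split:
  assumes "finite E" "v \<in> X" "X \<inter> Y = {}"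
  shows "card {e\<in>E. v \<in> e} = card {e\<in>{e\<in>E. e \<subseteq> X}. v \<in> e} + card {e\<in>{e\<in>E. \<not> e \<subseteq> X \<and> \<not> e \<subseteq> Y}. v \<in> e}"
proof -
  have "{e\<in>E. v \<in> e} = {e\<in>{e\<in>E. e \<subseteq> X}. v \<in> e} \<union> {e\<in>{e\<in>E. \<not> e \<subseteq> X \<and> \<not> e \<subseteq> Y}. v \<in> e}"
    using assms(2,3) by blast
  moreover have "{e\<in>{e\<in>E. e \<subseteq> X}. v \<in> e} \<inter> {e\<in>{e\<in>E. \<not> e \<subseteq> X \<and> \<not> e \<subseteq> Y}. v \<in> e} = {}" by blast
  ultimately show ?thesis using assms(1) by (simp add: card_Un_disjoint)
qed

lemma main_inj:
  assumes dc: "double_chain U L" and p1: "polygonization (U \<union> L) E1" and p2: "polygonization (U \<union> L) E2"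
    and hU: "{e\<in>E1. e \<subseteq> U} = {e\<in>E2. e \<subseteq> U}" and hL: "{e\<in>E1. e \<subseteq> L} = {e\<in>E2. e \<subseteq> L}"
  shows "E1 = E2"
proof -
  note F = dc_facts[OF dc]
  define B1 where "B1 = {e\<in>E1. \<not> e \<subseteq> U \<and> \<not> e \<subseteq> L}"
  define B2 where "B2 = {e\<in>E2. \<not> e \<subseteq> U \<and> \<not> e \<subseteq> L}"
  have fE: "finite E1" "finite E2" using p1 p2 by (simp_all add: poly_finite)
  have fB: "finite B1" "finite B2" unfolding B1_def B2_def using fE by simp_all
  have form1: "\<And>E e. polygonization (U \<union> L) E \<Longrightarrow> e \<in> E \<Longrightarrow> \<not> e \<subseteq> U \<Longrightarrow> \<not> e \<subseteq> L \<Longrightarrow> \<exists>x\<in>U. \<exists>y\<in>L. e = {x,y}"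
  proof -
    fix E e assume h: "polygonization (U \<union> L) E" "e \<in> E" "\<not> e \<subseteq> U" "\<not> e \<subseteq> L"
    obtain a b where ab: "a \<noteq> b" "a \<in> U \<union> L" "b \<in> U \<union> L" "e = {a,b}" using poly_edge[OF h(1,2)] by blast
    show "\<exists>x\<in>U. \<exists>y\<in>L. e = {x,y}"
    proof (cases "a \<in> U")
      case True
      then have "b \<notin> U" using h(3) ab by auto
      then have "b \<in> L" using ab by auto
      then show ?thesis using True ab by blast
    next
      case False
      then have "a \<in> L" using ab by auto
      then have "b \<notin> L" using h(4) ab by auto
      then have "b \<in> U" using ab by auto
      then show ?thesis using \<open>a \<in> L\<close> ab by (metis insert_commute)
    qed
  qed
  have form: "\<forall>e\<in>B1 \<union> B2. \<exists>x\<in>U. \<exists>y\<in>L. e = {x,y}"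
    unfolding B1_def B2_def using form1[OF p1] form1[OF p2] by blast
  have ncB: "\<And>E B. polygonization (U \<union> L) E \<Longrightarrow> B \<subseteq> E \<Longrightarrow> (\<forall>x x' y y'. x\<in>U \<longrightarrow> x'\<in>U \<longrightarrow> y\<in>L \<longrightarrow> y'\<in>L \<longrightarrow> {x,y}\<in>B \<longrightarrow> {x',y'}\<in>B \<longrightarrow> fst x < fst x' \<longrightarrow> fst y' < fst y \<longrightarrow> False)"
  proof (intro allI impI)
    fix E B x x' y y'
    assume h: "polygonization (U \<union> L) E" "B \<subseteq> E" "x\<in>U" "x'\<in>U" "y\<in>L" "y'\<in>L" "{x,y}\<in>B" "{x',y'}\<in>B" "fst x < fst x'" "fst y' < fst y"
    obtain p where p: "p \<in> closed_segment x y" "p \<in> closed_segment x' y'"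
      using bridge_cross[OF dc h(3-6,9,10)] by blast
    have "x \<noteq> x'" "y \<noteq> y'" using h(9,10) by auto
    moreover have "x \<noteq> y'" "x' \<noteq> y" using h(3-6) F(1) by auto
    moreover have "x \<noteq> y" "x' \<noteq> y'" using h(3-6) F(1) by auto
    ultimately have disj: "{x,y} \<inter> {x',y'} = {}" by auto
    show False using poly_nc[OF h(1) _ _ disj p(1) _ _ p(2)] h(2,7,8) by blast
  qed
  have nc1: "\<forall>x x' y y'. x\<in>U \<longrightarrow> x'\<in>U \<longrightarrow> y\<in>L \<longrightarrow> y'\<in>L \<longrightarrow> {x,y}\<in>B1 \<longrightarrow> {x',y'}\<in>B1 \<longrightarrow> fst x < fst x' \<longrightarrow> fst y' < fst y \<longrightarrow> False"
    by (rule ncB[OF p1]) (auto simp: B1_def)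
  have nc2: "\<forall>x x' y y'. x\<in>U \<longrightarrow> x'\<in>U \<longrightarrow> y\<in>L \<longrightarrow> y'\<in>L \<longrightarrow> {x,y}\<in>B2 \<longrightarrow> {x',y'}\<in>B2 \<longrightarrow> fst x < fst x' \<longrightarrow> fst y' < fst y \<longrightarrow> False"
    by (rule ncB[OF p2]) (auto simp: B2_def)
  have deg: "\<forall>v. card {e\<in>B1. v\<in>e} = card {e\<in>B2. v\<in>e}"
  proof
    fix v
    show "card {e\<in>B1. v\<in>e} = card {e\<in>B2. v\<in>e}"
    proof (cases "v \<in> U \<union> L")
      case False
      have "\<And>E e. polygonization (U \<union> L) E \<Longrightarrow> e \<in> E \<Longrightarrow> v \<notin> e"
        using poly_edge False by blast
      then have e: "{e\<in>B1. v\<in>e} = {}" "{e\<in>B2. v\<in>e} = {}" unfolding B1_def B2_def using p1 p2 by blast+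
      show ?thesis by (simp only: e card.empty)
    next
      case True
      show ?thesis
      proof (cases "v \<in> U")
        case vU: True
        have "card {e\<in>E1. v \<in> e} = card {e\<in>{e\<in>E1. e \<subseteq> U}. v \<in> e} + card {e\<in>B1. v \<in> e}"
          unfolding B1_def by (rule deg_split[OF fE(1) vU F(1)])
        moreover have "card {e\<in>E2. v \<in> e} = card {e\<in>{e\<in>E2. e \<subseteq> U}. v \<in> e} + card {e\<in>B2. v \<in> e}"
          unfolding B2_def by (rule deg_split[OF fE(2) vU F(1)])
        moreover have "card {e\<in>E1. v \<in> e} = 2" "card {e\<in>E2. v \<in> e} = 2"
          using poly_deg[OF p1 True] poly_deg[OF p2 True] by simp_all
        ultimately show ?thesis using hU by simp
      next
        case False
        then have vL: "v \<in> L" using True by simp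
        have F1': "L \<inter> U = {}" using F(1) by blast
        have "{e\<in>E1. \<not> e \<subseteq> U \<and> \<not> e \<subseteq> L} = {e\<in>E1. \<not> e \<subseteq> L \<and> \<not> e \<subseteq> U}"
             "{e\<in>E2. \<not> e \<subseteq> U \<and> \<not> e \<subseteq> L} = {e\<in>E2. \<not> e \<subseteq> L \<and> \<not> e \<subseteq> U}" by blast+
        then have bb: "B1 = {e\<in>E1. \<not> e \<subseteq> L \<and> \<not> e \<subseteq> U}" "B2 = {e\<in>E2. \<not> e \<subseteq> L \<and> \<not> e \<subseteq> U}"
          unfolding B1_def B2_def by simp_all
        have "card {e\<in>E1. v \<in> e} = card {e\<in>{e\<in>E1. e \<subseteq> L}. v \<in> e} + card {e\<in>B1. v \<in> e}"
          unfolding bb by (rule deg_split[OF fE(1) vL F1'])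
        moreover have "card {e\<in>E2. v \<in> e} = card {e\<in>{e\<in>E2. e \<subseteq> L}. v \<in> e} + card {e\<in>B2. v \<in> e}"
          unfolding bb by (rule deg_split[OF fE(2) vL F1'])
        moreover have "card {e\<in>E1. v \<in> e} = 2" "card {e\<in>E2. v \<in> e} = 2"
          using poly_deg[OF p1 True] poly_deg[OF p2 True] by simp_all
        ultimately show ?thesis using hL by simp
      qed
    qed
  qed
  have "B1 = B2" using bridge_unique[OF F(1) F(4) F(5) fB refl form nc1 nc2 deg] .
  have "E1 = {e\<in>E1. e \<subseteq> U} \<union> {e\<in>E1. e \<subseteq> L} \<union> B1" unfolding B1_def by blast
  also have "\<dots> = {e\<in>E2. e \<subseteq> U} \<union> {e\<in>E2. e \<subseteq> L} \<union> B2" using hU hL \<open>B1 = B2\<close> by simp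
  also have "\<dots> = E2" unfolding B2_def by blast
  finally show ?thesis .
qed

lemma image_Pow_eq:
  assumes "inj_on f X" "A \<subseteq> Pow X" "B \<subseteq> Pow X" "(\<lambda>e. f ` e) ` A = (\<lambda>e. f ` e) ` B"
  shows "A = B"
proof -
  have "inj_on (\<lambda>e. f ` e) (Pow X)" using assms(1) by (rule inj_on_image_Pow)
  then show ?thesis using assms(2-4) by (simp add: inj_on_image_eq_iff)
qed

lemma count_main:
  assumes dc: "double_chain U L" and ne: "U \<noteq> {}" "L \<noteq> {}"
  shows "card {E. polygonization (U \<union> L) E} \<le> fLF (card U) * fLF (card L)"
proof -
  note F = dc_facts[OF dc]
  obtain u where u: "bij_betw u {..<card U} U" "chainp u (card U)" using chain_enum[OF F(2) F(4) F(6)] by blast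
  obtain w where w: "bij_betw w {..<card L} L" "chainp w (card L)" using chain_enum[OF F(3) F(5) F(7)] by blast
  let ?iu = "inv_into {..<card U} u"
  let ?iw = "inv_into {..<card L} w"
  define \<Phi> where "\<Phi> E = ((\<lambda>e. ?iu ` e) ` {e\<in>E. e \<subseteq> U}, (\<lambda>e. ?iw ` e) ` {e\<in>E. e \<subseteq> L})" for E
  obtain vL where vL: "vL \<in> L" using ne by blast
  obtain vU where vU: "vU \<in> U" using ne by blast
  have img: "\<Phi> ` {E. polygonization (U \<union> L) E} \<subseteq> LF {..<card U} \<times> LF {..<card L}"
  proof
    fix p assume "p \<in> \<Phi> ` {E. polygonization (U \<union> L) E}"
    then obtain E where E: "polygonization (U \<union> L) E" "p = \<Phi> E" by blast
    have "vL \<notin> U" "vU \<notin> L" using vL vU F(1) by auto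
    then have "(\<lambda>e. ?iu ` e) ` {e\<in>E. e \<subseteq> U} \<in> LF {..<card U}" "(\<lambda>e. ?iw ` e) ` {e\<in>E. e \<subseteq> L} \<in> LF {..<card L}"
      using part_LF[OF E(1) _ u(1) u(2), of vL] part_LF[OF E(1) _ w(1) w(2), of vU] vL vU by auto
    then show "p \<in> LF {..<card U} \<times> LF {..<card L}" using E(2) unfolding \<Phi>_def by simp
  qed
  have injU: "inj_on ?iu U" using bij_betw_inv_into[OF u(1)] by (rule bij_betw_imp_inj_on)
  have injL: "inj_on ?iw L" using bij_betw_inv_into[OF w(1)] by (rule bij_betw_imp_inj_on)
  have inj: "inj_on \<Phi> {E. polygonization (U \<union> L) E}"
  proof (rule inj_onI)
    fix E1 E2 assume h: "E1 \<in> {E. polygonization (U \<union> L) E}" "E2 \<in> {E. polygonization (U \<union> L) E}" "\<Phi> E1 = \<Phi> E2"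
    have "{e\<in>E1. e \<subseteq> U} = {e\<in>E2. e \<subseteq> U}"
      by (rule image_Pow_eq[OF injU]) (use h(3) in \<open>auto simp: \<Phi>_def\<close>)
    moreover have "{e\<in>E1. e \<subseteq> L} = {e\<in>E2. e \<subseteq> L}"
      by (rule image_Pow_eq[OF injL]) (use h(3) in \<open>auto simp: \<Phi>_def\<close>)
    ultimately show "E1 = E2" using main_inj[OF dc] h(1,2) by blast
  qed
  have fin: "finite (LF {..<card U} \<times> LF {..<card L})" by (simp add: LF_finite)
  have "card {E. polygonization (U \<union> L) E} \<le> card (LF {..<card U} \<times> LF {..<card L})"
    by (rule card_inj_on_le[OF inj img fin])
  also have "\<dots> = fLF (card U) * fLF (card L)" by (simp add: card_cartesian_product fLF_def)
  finally show ?thesis .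
qed

lemma count_degen:
  assumes fin: "finite X" and inj: "inj_on fst X" and ch: "convex_chain X \<or> concave_chain X"
  shows "card {E. polygonization X E} \<le> fLF (card X)"
proof -
  obtain u where u: "bij_betw u {..<card X} X" "chainp u (card X)" using chain_enum[OF fin inj ch] by blast
  let ?i = "inv_into {..<card X} u"
  define sel where "sel E = (SOME e. e \<in> E)" for E :: "(real \<times> real) set set"
  define \<Psi> where "\<Psi> E = (\<lambda>e. ?i ` e) ` (E - {sel E})" for E
  have selin: "\<And>E. polygonization X E \<Longrightarrow> sel E \<in> E"
  proof -
    fix E assume p: "polygonization X E"
    obtain vs where vs: "distinct vs" "set vs = X" "3 \<le> length vs" "E = cycle_edges vs"
      using p by (rule poly_vs)
    have "0 < length vs" using vs(3) by arith
    then have "vs ! 0 \<in> set vs" by (rule nth_mem)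
    then have "vs ! 0 \<in> X" using vs(2) by simp
    then have "card {e\<in>E. vs ! 0 \<in> e} = 2" by (rule poly_deg[OF p])
    then have "E \<noteq> {}" by auto
    then show "sel E \<in> E" unfolding sel_def by (simp add: some_in_eq)
  qed
  have img: "\<Psi> ` {E. polygonization X E} \<subseteq> LF {..<card X}"
  proof
    fix p assume "p \<in> \<Psi> ` {E. polygonization X E}"
    then obtain E where E: "polygonization X E" "p = \<Psi> E" by blast
    show "p \<in> LF {..<card X}" using full_LF[OF E(1) u(1) u(2) selin[OF E(1)]] E(2) unfolding \<Psi>_def by simp
  qed
  have injX: "inj_on ?i X" using bij_betw_inv_into[OF u(1)] by (rule bij_betw_imp_inj_on)
  have sub: "\<And>E. polygonization X E \<Longrightarrow> E \<subseteq> Pow X"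
  proof
    fix E e assume "polygonization X E" "e \<in> E"
    then show "e \<in> Pow X" using poly_edge by blast
  qed
  have rec: "\<And>E. polygonization X E \<Longrightarrow> sel E = {v\<in>X. card {e\<in>E - {sel E}. v \<in> e} \<noteq> 2}"
  proof -
    fix E assume p: "polygonization X E"
    have fE: "finite E" using p by (rule poly_finite)
    have s: "sel E \<in> E" using p by (rule selin)
    have sX: "sel E \<subseteq> X" using sub[OF p] s by blast
    show "sel E = {v\<in>X. card {e\<in>E - {sel E}. v \<in> e} \<noteq> 2}"
    proof (rule set_eqI)
      fix v
      show "v \<in> sel E \<longleftrightarrow> v \<in> {v\<in>X. card {e\<in>E - {sel E}. v \<in> e} \<noteq> 2}"
      proof (cases "v \<in> X")
        case True
        have "card {e\<in>E - {sel E}. v \<in> e} = 2 - (if v \<in> sel E then 1 else 0)"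
          using deg_remove[OF fE s, of v] poly_deg[OF p True] by simp
        then show ?thesis using True by auto
      next
        case False then show ?thesis using sX by auto
      qed
    qed
  qed
  have injP: "inj_on \<Psi> {E. polygonization X E}"
  proof (rule inj_onI)
    fix E1 E2 assume h: "E1 \<in> {E. polygonization X E}" "E2 \<in> {E. polygonization X E}" "\<Psi> E1 = \<Psi> E2"
    have p: "polygonization X E1" "polygonization X E2" using h by auto
    have D: "E1 - {sel E1} = E2 - {sel E2}"
    proof (rule image_Pow_eq[OF injX])
      show "E1 - {sel E1} \<subseteq> Pow X" using sub[OF p(1)] by blast
      show "E2 - {sel E2} \<subseteq> Pow X" using sub[OF p(2)] by blast
      show "(\<lambda>e. ?i ` e) ` (E1 - {sel E1}) = (\<lambda>e. ?i ` e) ` (E2 - {sel E2})" using h(3) unfolding \<Psi>_def .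
    qed
    have "sel E1 = {v\<in>X. card {e\<in>E1 - {sel E1}. v \<in> e} \<noteq> 2}" by (rule rec[OF p(1)])
    also have "\<dots> = {v\<in>X. card {e\<in>E2 - {sel E2}. v \<in> e} \<noteq> 2}" by (simp only: D)
    also have "\<dots> = sel E2" by (rule rec[OF p(2), symmetric])
    finally have "sel E1 = sel E2" .
    have "E1 = insert (sel E1) (E1 - {sel E1})" using selin[OF p(1)] by (rule insert_Diff[symmetric])
    also have "\<dots> = insert (sel E2) (E2 - {sel E2})" using D \<open>sel E1 = sel E2\<close> by simp
    also have "\<dots> = E2" using selin[OF p(2)] by (rule insert_Diff)
    finally show "E1 = E2" .
  qed
  have "card {E. polygonization X E} \<le> card (LF {..<card X})"
    by (rule card_inj_on_le[OF injP img]) (simp add: LF_finite)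
  then show ?thesis by (simp add: fLF_def)
qed

theorem corollary4:
  shows "\<exists>C::real. \<forall>U L. double_chain U L \<longrightarrow>
           real (card {E. polygonization (U \<union> L) E}) \<le> C * (5.610718614::real) ^ (card U + card L)"
proof (intro exI allI impI)
  fix U L :: "(real \<times> real) set"
  assume dc: "double_chain U L"
  note F = dc_facts[OF dc]
  have q: "(5.610718614::real) = qq" by (simp add: qq_def)
  have Y1: "1 \<le> YY" by (simp add: YY_def)
  have qpos: "0 < qq" by (simp add: qq_def)
  have q1: "1 \<le> qq" by (simp add: qq_def)
  have main: "real (card {E. polygonization (U \<union> L) E}) \<le> YY^2 * qq ^ (card U + card L)"
  proof (cases "U = {}")
    case U0: True
    show ?thesis
    proof (cases "L = {}")
      case True
      have "{E. polygonization (U \<union> L) E} = {}"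
      proof -
        have "\<And>E. \<not> polygonization {} E" unfolding polygonization_def by auto
        then show ?thesis using U0 True by simp
      qed
      then show ?thesis using qpos by simp
    next
      case False
      have "real (card {E. polygonization (U \<union> L) E}) \<le> real (fLF (card L))"
        using count_degen[OF F(3) F(5) F(7)] U0 by simp
      also have "\<dots> \<le> YY * qq^(card L)" by (rule fLF_bound)
      also have "\<dots> \<le> YY^2 * qq^(card U + card L)" using U0 Y1 qpos by (simp add: power2_eq_square)
      finally show ?thesis .
    qed
  next
    case U1: False
    show ?thesis
    proof (cases "L = {}")
      case True
      have "real (card {E. polygonization (U \<union> L) E}) \<le> real (fLF (card U))"
        using count_degen[OF F(2) F(4) F(6)] True by simp
      also have "\<dots> \<le> YY * qq^(card U)" by (rule fLF_bound)
      also have "\<dots> \<le> YY^2 * qq^(card U + card L)" using True Y1 qpos by (simp add: power2_eq_square)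
      finally show ?thesis .
    next
      case False
      have "real (card {E. polygonization (U \<union> L) E}) \<le> real (fLF (card U)) * real (fLF (card L))"
        using count_main[OF dc U1 False] by (simp flip: of_nat_mult)
      also have "\<dots> \<le> (YY * qq^(card U)) * (YY * qq^(card L))"
        by (intro mult_mono fLF_bound) (use Y1 qpos in auto)
      also have "\<dots> = YY^2 * qq^(card U + card L)" by (simp add: power_add power2_eq_square)
      finally show ?thesis .
    qed
  qed
  then show "real (card {E. polygonization (U \<union> L) E}) \<le> YY^2 * (5.610718614::real) ^ (card U + card L)"
    by (simp only: q)
qed

end
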